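(* Let $n\ge 2$, $0<q<n$ and $k\in\{1,\dots,n-1\}$. Then there exist a sequence of origin-symmetric convex bodies $K_l\subset\mathbb{R}^n$, $l\in\mathbb N$, and a $k$-dimensional linear subspace $L\subset\mathbb{R}^n$ such that $$\lim_{l\to\infty}\frac{\widetilde C_q(K_l,S^{n-1}\cap L)}{\widetilde C_q(K_l,S^{n-1})}=\begin{cases}k/q, & k\le q,\\ 1, & k\ge q.\end{cases}$$ (For instance, one may take $L=\mathrm{lin}\{e_1,\dots,e_k\}$ and $K_l=(r_l B_k)\times B_{n-k}$ with $r_l\to 0^+$, where $B_m$ is the Euclidean unit ball of $\mathbb R^m$.)
   Context: A convex body is a compact convex subset of $\mathbb{R}^n$ with non-empty interior; origin-symmetric means $K=-K$. For a convex body $K$ with the origin in its interior: $h_K(x)=\max_{y\in K}\langle x,y\rangle$, $\rho_K(x)=\max\{\rho>0:\rho x\in K\}$, $H_K(v)=\{x:\langle x,v\rangle=h_K(v)\}$, and for $\eta\subseteq S^{n-1}$, $\alpha_K^*(\eta)=\{u\in S^{n-1}:\rho_K(u)u\in H_K(v)\text{ for some }v\in\eta\}$. The $q$-th dual curvature measure of a Borel set $\eta\subseteq S^{n-1}$ is $\widetilde C_q(K,\eta)=\frac1n\int_{\alpha_K^*(\eta)}\rho_K(u)^q\,d\mathcal H^{n-1}(u)$. *)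

theory Defs
  imports "HOL-Analysis.Analysis"
begin

definition convex_body :: "'a::euclidean_space set \<Rightarrow> bool" where
  "convex_body K \<longleftrightarrow> compact K \<and> convex K \<and> interior K \<noteq> {}"

definition origin_symmetric :: "'a::euclidean_space set \<Rightarrow> bool" where
  "origin_symmetric K \<longleftrightarrow> uminus ` K = K"

definition support_fun :: "'a::euclidean_space set \<Rightarrow> 'a \<Rightarrow> real" where
  "support_fun K x = Sup ((\<lambda>y. x \<bullet> y) ` K)"

definition radial_fun :: "'a::euclidean_space set \<Rightarrow> 'a \<Rightarrow> real" where
  "radial_fun K x = Sup {r. r > 0 \<and> r *\<^sub>R x \<in> K}"

definition supp_hyperplane :: "'a::euclidean_space set \<Rightarrow> 'a \<Rightarrow> 'a set" where
  "supp_hyperplane K v = {x. x \<bullet> v = support_fun K v}"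

definition rev_radial_gauss :: "'a::euclidean_space set \<Rightarrow> 'a set \<Rightarrow> 'a set" where
  "rev_radial_gauss K \<eta> =
     {u \<in> sphere 0 1. \<exists>v\<in>\<eta>. radial_fun K u *\<^sub>R u \<in> supp_hyperplane K v}"

text \<open>Spherical Lebesgue measure (= (n-1)-dimensional Hausdorff measure on the unit
  sphere), defined by the cone construction: sigma(A) = n * vol({t u : u in A, 0 < t \<le> 1}).\<close>
definition sphere_measure :: "'a::euclidean_space measure" where
  "sphere_measure = measure_of (sphere 0 1) (sets (restrict_space borel (sphere (0::'a) 1)))
     (\<lambda>A. of_nat DIM('a) * emeasure lebesgue {t *\<^sub>R u | t u. 0 < t \<and> t \<le> 1 \<and> u \<in> A})"

definition dual_curv_measure :: "real \<Rightarrow> 'a::euclidean_space set \<Rightarrow> 'a set \<Rightarrow> real" where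
  "dual_curv_measure q K \<eta> =
     (1 / real DIM('a)) * (LINT u : rev_radial_gauss K \<eta> | sphere_measure. radial_fun K u powr q)"

end

theory Submission
  imports Defs
begin


definition cone1 :: "'a::euclidean_space set \<Rightarrow> 'a set" where
  "cone1 A = {x. x \<noteq> 0 \<and> norm x \<le> 1 \<and> x /\<^sub>R norm x \<in> A}"

lemma cone1_alt:
  assumes "A \<subseteq> sphere 0 1"
  shows "{t *\<^sub>R u | t u. 0 < t \<and> t \<le> 1 \<and> u \<in> A} = cone1 A"
proof (intro set_eqI iffI)
  fix x assume "x \<in> {t *\<^sub>R u | t u. 0 < t \<and> t \<le> 1 \<and> u \<in> A}"
  then obtain t u where x: "x = t *\<^sub>R u" "0 < t" "t \<le> 1" "u \<in> A" by blast
  have nu: "norm u = 1" using x(4) assms by auto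
  then show "x \<in> cone1 A" using x by (auto simp: cone1_def)
next
  fix x assume "x \<in> cone1 A"
  then have x: "x \<noteq> 0" "norm x \<le> 1" "x /\<^sub>R norm x \<in> A" by (auto simp: cone1_def)
  show "x \<in> {t *\<^sub>R u | t u. 0 < t \<and> t \<le> 1 \<and> u \<in> A}"
    by (rule CollectI, rule exI[of _ "norm x"], rule exI[of _ "x /\<^sub>R norm x"]) (use x in auto)
qed

lemma cone1_borel:
  assumes "A \<in> sets (restrict_space borel (sphere (0::'a::euclidean_space) 1))"
  shows "cone1 A \<in> sets borel"
proof -
  obtain A' where A': "A' \<in> sets borel" "A = sphere 0 1 \<inter> A'"
    using assms by (auto simp: sets_restrict_space)
  have "cone1 A = {x. x \<noteq> 0 \<and> norm x \<le> 1 \<and> x /\<^sub>R norm x \<in> A'}"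
    using A' by (auto simp: cone1_def norm_divide)
  also have "\<dots> \<in> sets borel" using A'(1) by measurable
  finally show ?thesis .
qed

lemma emeasure_sphere_measure:
  assumes A: "A \<in> sets (restrict_space borel (sphere (0::'a::euclidean_space) 1))"
  shows "emeasure (sphere_measure :: 'a measure) A = of_nat DIM('a) * emeasure lborel (cone1 A)"
proof -
  let ?M = "sets (restrict_space borel (sphere (0::'a) 1))"
  let ?mu = "\<lambda>A::'a set. of_nat DIM('a) * emeasure lebesgue {t *\<^sub>R u | t u. 0 < t \<and> t \<le> 1 \<and> u \<in> A}"
  have sub: "B \<subseteq> sphere 0 1" if "B \<in> ?M" for B
    using that by (auto simp: sets_restrict_space)
  have mu: "?mu B = of_nat DIM('a) * emeasure lborel (cone1 B)" if "B \<in> ?M" for B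
    using cone1_alt[OF sub[OF that]] cone1_borel[OF that] by (simp add: emeasure_completion)
  have sa: "sigma_algebra (sphere 0 1) ?M"
    using sets.sigma_algebra_axioms[of "restrict_space borel (sphere (0::'a) 1)"]
    by (simp add: space_restrict_space)
  have pos: "positive ?M ?mu"
    unfolding positive_def using cone1_alt[of "{}"] by (simp add: cone1_def)
  have ca: "countably_additive ?M ?mu"
    unfolding countably_additive_def
  proof (intro allI impI)
    fix F :: "nat \<Rightarrow> 'a set"
    assume F: "range F \<subseteq> ?M" "disjoint_family F" "\<Union> (range F) \<in> ?M"
    have Fi: "F i \<in> ?M" for i using F by auto
    have "(\<Sum>i. ?mu (F i)) = (\<Sum>i. of_nat DIM('a) * emeasure lborel (cone1 (F i)))"
      using mu[OF Fi] by simp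
    also have "\<dots> = of_nat DIM('a) * (\<Sum>i. emeasure lborel (cone1 (F i)))"
      by (simp add: ennreal_suminf_cmult)
    also have "(\<Sum>i. emeasure lborel (cone1 (F i))) = emeasure lborel (\<Union>i. cone1 (F i))"
    proof (rule suminf_emeasure)
      show "range (\<lambda>i. cone1 (F i)) \<subseteq> sets lborel" using cone1_borel[OF Fi] by auto
      show "disjoint_family (\<lambda>i. cone1 (F i))"
        using F(2) by (auto simp: disjoint_family_on_def cone1_def)
    qed
    also have "(\<Union>i. cone1 (F i)) = cone1 (\<Union>(range F))" by (auto simp: cone1_def)
    finally show "(\<Sum>i. ?mu (F i)) = ?mu (\<Union>(range F))" using mu[OF F(3)] by simp
  qed
  show ?thesis
    unfolding sphere_measure_def
    by (subst emeasure_measure_of_sigma[OF sa pos ca A]) (rule mu[OF A])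
qed

lemma space_sphere_measure: "space (sphere_measure :: 'a::euclidean_space measure) = sphere 0 1"
  unfolding sphere_measure_def by (rule space_measure_of_conv)

lemma sets_sphere_measure: "sets (sphere_measure :: 'a::euclidean_space measure) = sets (restrict_space borel (sphere (0::'a) 1))"
proof -
  have sa: "sigma_algebra (sphere 0 1) (sets (restrict_space borel (sphere (0::'a) 1)))"
    using sets.sigma_algebra_axioms[of "restrict_space borel (sphere (0::'a) 1)"]
    by (simp add: space_restrict_space)
  show ?thesis unfolding sphere_measure_def
    using sets.space_closed[of "restrict_space borel (sphere (0::'a) 1)"]
    by (subst sets_measure_of) (auto simp: space_restrict_space sigma_algebra.sigma_sets_eq[OF sa])
qed


lemma meas_eq_atMost:
  fixes M N :: "real measure"
  assumes sM: "sets M = sets borel" and sN: "sets N = sets borel"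
    and eq: "\<And>a. emeasure M {..a} = emeasure N {..a}"
    and fin: "\<And>a. emeasure M {..a} < \<infinity>"
  shows "M = N"
proof (rule measure_eqI_generator_eq[where E="range atMost" and \<Omega>=UNIV and A="\<lambda>i. {..real i}"])
  have sb: "sets (borel::real measure) = sigma_sets UNIV (range atMost)"
    by (subst borel_eq_atMost) (simp add: sets_measure_of)
  show "Int_stable (range (atMost :: real \<Rightarrow> real set))"
    by (auto simp: Int_stable_def intro!: exI[of _ "min _ _"])
  show "range atMost \<subseteq> Pow (UNIV::real set)" by auto
  show "sets M = sigma_sets UNIV (range atMost)" using sM sb by simp
  show "sets N = sigma_sets UNIV (range atMost)" using sN sb by simp
  show "range (\<lambda>i. {..real i}) \<subseteq> range atMost" by auto
  show "(\<Union>i. {..real i}) = UNIV"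
    by (auto simp: real_arch_simple)
  show "emeasure M {..real i} \<noteq> \<infinity>" for i using fin[of "real i"] by simp
qed (use eq in auto)

lemma lborel_scale_emeasure:
  fixes A :: "'a::euclidean_space set"
  assumes c: "c > 0" and A: "A \<in> sets borel"
  shows "emeasure lborel A = ennreal (c ^ DIM('a)) * emeasure lborel {x. c *\<^sub>R x \<in> A}"
proof -
  have eq: "lborel = density (distr lborel borel (\<lambda>x::'a. 0 + c *\<^sub>R x)) (\<lambda>_. \<bar>c\<bar>^DIM('a))"
    using lborel_affine[of c "0::'a"] c by simp
  have "emeasure (density (distr lborel borel (\<lambda>x::'a. 0 + c *\<^sub>R x)) (\<lambda>_. \<bar>c\<bar>^DIM('a))) A
        = ennreal (c ^ DIM('a)) * emeasure lborel {x. c *\<^sub>R x \<in> A}"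
    using A c
    by (simp add: emeasure_density nn_integral_distr nn_integral_cmult_indicator[symmetric]
         indicator_def of_bool_def if_distrib[of "\<lambda>x. _ * x"] cong: if_cong)
  with eq show ?thesis by simp
qed

definition unitv :: "'a::euclidean_space" where "unitv = (SOME b. b \<in> Basis)"

lemma unitv_Basis: "unitv \<in> Basis"
  unfolding unitv_def by (rule someI_ex) (use nonempty_Basis in blast)

lemma norm_unitv[simp]: "norm (unitv::'a::euclidean_space) = 1"
  by (rule norm_Basis[OF unitv_Basis])

definition pol2 :: "'a::euclidean_space \<Rightarrow> 'a" where
  "pol2 x = (if x = 0 then unitv else x /\<^sub>R norm x)"

lemma pol2_sphere: "pol2 x \<in> sphere 0 1"
  by (auto simp: pol2_def norm_divide)

lemma pol2_borel[measurable]: "pol2 \<in> borel_measurable borel"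
  unfolding pol2_def by measurable

lemma pol2_recover: "norm x *\<^sub>R pol2 x = x"
  by (auto simp: pol2_def)

definition mur :: "nat \<Rightarrow> real measure" where
  "mur n = density lborel (\<lambda>t. ennreal (t powr (real n - 1)) * indicator {0..} t)"

lemma sets_mur[simp, measurable_cong]: "sets (mur n) = sets borel"
  by (simp add: mur_def)

lemma emeasure_mur_atMost:
  assumes n: "n \<ge> 1"
  shows "emeasure (mur n) {..a} = (if a < 0 then 0 else ennreal (a powr real n / real n))"
proof -
  have "emeasure (mur n) {..a} = (\<integral>\<^sup>+t. ennreal (t powr (real n - 1)) * indicator {0..a} t \<partial>lborel)"
    unfolding mur_def
    by (subst emeasure_density) (auto intro!: nn_integral_cong simp: indicator_def)
  also have "\<dots> = (if a < 0 then 0 else ennreal (a powr real n / real n))"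
  proof (cases "a < 0")
    case True then show ?thesis by (simp add: indicator_def)
  next
    case False
    have "((\<lambda>t. t powr (real n - 1)) has_integral (a powr (real n - 1 + 1) / (real n - 1 + 1))) {0..a}"
      using n False by (intro has_integral_powr_from_0) auto
    then have "(\<integral>\<^sup>+t. ennreal (t powr (real n - 1)) * indicator {0..a} t \<partial>lborel) = ennreal (a powr (real n - 1 + 1) / (real n - 1 + 1))"
      by (intro nn_integral_has_integral_lebesgue') auto
    then show ?thesis using False by simp
  qed
  finally show ?thesis .
qed

lemma sigma_finite_mur: "sigma_finite_measure (mur n)"
  unfolding mur_def by (subst sigma_finite_measure.sigma_finite_iff_density_finite[OF sigma_finite_lborel]) (auto intro!: AE_I2 split: split_indicator)

lemma finite_sphere_measure: "finite_measure (sphere_measure :: 'a::euclidean_space measure)"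
proof
  have sp: "sphere (0::'a) 1 \<in> sets (restrict_space borel (sphere (0::'a) 1))"
    by (metis sets.top space_borel space_restrict_space inf_top.right_neutral)
  have "emeasure lborel (cone1 (sphere (0::'a) 1)) \<le> emeasure lborel (cball (0::'a) 1)"
    by (intro emeasure_mono) (auto simp: cone1_def)
  also have "\<dots> < \<infinity>" by (rule emeasure_lborel_cball_finite)
  finally show "emeasure (sphere_measure :: 'a measure) (space sphere_measure) \<noteq> \<infinity>"
    by (simp add: space_sphere_measure emeasure_sphere_measure[OF sp] ennreal_mult_eq_top_iff)
qed

lemma measurable_pol2_sphere: "pol2 \<in> borel \<rightarrow>\<^sub>M (sphere_measure :: 'a::euclidean_space measure)"
  apply (subst measurable_cong_sets[OF refl sets_sphere_measure])
  apply (rule measurable_restrict_space2)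
  using pol2_sphere apply blast
  apply (rule pol2_borel)
  done

lemma measurable_sphere_id: "(\<lambda>x. x) \<in> (sphere_measure :: 'a::euclidean_space measure) \<rightarrow>\<^sub>M borel"
  apply (subst measurable_cong_sets[OF sets_sphere_measure refl])
  apply (rule measurable_restrict_space1)
  apply simp
  done

lemma polar_rect:
  assumes B: "B \<in> sets (sphere_measure :: 'a::euclidean_space measure)" and A: "A \<in> sets borel"
  shows "emeasure lborel {x::'a. norm x \<in> A \<and> pol2 x \<in> B} = emeasure (mur DIM('a)) A * emeasure sphere_measure B"
proof -
  let ?n = "DIM('a)"
  let ?P = "{x::'a. pol2 x \<in> B}"
  have Br: "B \<in> sets (restrict_space borel (sphere (0::'a) 1))" using B sets_sphere_measure by auto
  then obtain B' where B': "B' \<in> sets borel" "B = sphere 0 1 \<inter> B'"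
    by (auto simp: sets_restrict_space)
  have Pe: "?P = {x. pol2 x \<in> B'}" using B' pol2_sphere by auto
  have P[measurable]: "?P \<in> sets borel" unfolding Pe using B'(1) by measurable
  define N1 where "N1 = distr (density lborel (indicator ?P)) borel (norm :: 'a \<Rightarrow> real)"
  define N2 where "N2 = density (mur ?n) (\<lambda>_. emeasure sphere_measure B)"
  have N1A: "emeasure N1 X = emeasure lborel {x::'a. norm x \<in> X \<and> pol2 x \<in> B}" if X: "X \<in> sets borel" for X
  proof -
    have nX: "(norm :: 'a \<Rightarrow> real) -` X \<in> sets borel"
      by (rule measurable_sets_borel[OF borel_measurable_norm X])
    have "emeasure N1 X = emeasure (density lborel (indicator ?P)) (norm -` X)"
      unfolding N1_def using X nX by (subst emeasure_distr) auto
    also have "\<dots> = (\<integral>\<^sup>+x. indicator {x::'a. norm x \<in> X \<and> pol2 x \<in> B} x \<partial>lborel)"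
      using X nX by (subst emeasure_density) (auto intro!: nn_integral_cong simp: indicator_def)
    also have "\<dots> = emeasure lborel {x::'a. norm x \<in> X \<and> pol2 x \<in> B}"
    proof (intro nn_integral_indicator)
      have "{x::'a. norm x \<in> X \<and> pol2 x \<in> B} = norm -` X \<inter> ?P" by auto
      then show "{x::'a. norm x \<in> X \<and> pol2 x \<in> B} \<in> sets lborel" using nX P by simp
    qed
    finally show ?thesis .
  qed
  have N2A: "emeasure N2 X = emeasure (mur ?n) X * emeasure sphere_measure B" if X: "X \<in> sets borel" for X
    unfolding N2_def using X
    by (subst emeasure_density) (auto simp: nn_integral_cmult_indicator mult.commute[of "indicator X _"] intro: mult.commute)
  have key: "emeasure lborel {x::'a. norm x \<le> a \<and> pol2 x \<in> B} = emeasure (mur ?n) {..a} * emeasure sphere_measure B" for a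
  proof (cases "a \<le> 0")
    case True
    have "emeasure lborel {x::'a. norm x \<le> a \<and> pol2 x \<in> B} \<le> emeasure lborel {0::'a}"
      using True by (intro emeasure_mono) (auto, metis norm_le_zero_iff order.trans)
    also have "\<dots> = 0" using countable_imp_null_set_lborel[of "{0::'a}"] by auto
    finally have 0: "emeasure lborel {x::'a. norm x \<le> a \<and> pol2 x \<in> B} = 0" by simp
    have "emeasure (mur ?n) {..a} = 0"
      using True by (subst emeasure_mur_atMost) (auto simp: DIM_positive)
    then show ?thesis using 0 by simp
  next
    case False
    then have a: "a > 0" by simp
    define Ca where "Ca = {x::'a. x \<noteq> 0 \<and> norm x \<le> a \<and> pol2 x \<in> B}"
    have "Ca = {x. x \<noteq> 0 \<and> norm x \<le> a \<and> pol2 x \<in> B'}" using B' pol2_sphere by (auto simp: Ca_def)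
    also have "\<dots> \<in> sets borel" using B'(1) by measurable
    finally have Ca[measurable]: "Ca \<in> sets borel" .
    have split: "{x::'a. norm x \<le> a \<and> pol2 x \<in> B} = Ca \<union> ({0} \<inter> {x::'a. norm x \<le> a \<and> pol2 x \<in> B})"
      unfolding Ca_def by auto
    have null: "{0} \<inter> {x::'a. norm x \<le> a \<and> pol2 x \<in> B} \<in> null_sets lborel"
      by (rule countable_imp_null_set_lborel, rule countable_subset[of _ "{0}"]) auto
    have "emeasure lborel {x::'a. norm x \<le> a \<and> pol2 x \<in> B} = emeasure lborel Ca"
      using emeasure_Un_null_set[of Ca lborel, OF _ null] Ca split by simp
    also have "\<dots> = ennreal (a ^ ?n) * emeasure lborel {x. a *\<^sub>R x \<in> Ca}"
      by (rule lborel_scale_emeasure[OF a Ca])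
    also have "{x. a *\<^sub>R x \<in> Ca} = cone1 B"
    proof -
      have e: "inverse a * inverse (norm x) * a = inverse (norm x)" for x using a by simp
      show ?thesis using a by (auto simp: Ca_def cone1_def pol2_def e divide_inverse_commute)
    qed
    finally have l: "emeasure lborel {x::'a. norm x \<le> a \<and> pol2 x \<in> B} = ennreal (a ^ ?n) * emeasure lborel (cone1 B)" .
    have r: "emeasure (mur ?n) {..a} * emeasure sphere_measure B
          = ennreal (a ^ ?n / real ?n) * (of_nat ?n * emeasure lborel (cone1 B))"
      using a by (simp add: emeasure_mur_atMost DIM_positive emeasure_sphere_measure[OF Br] powr_realpow)
    also have "\<dots> = ennreal (a ^ ?n) * emeasure lborel (cone1 B)"
    proof -
      have "ennreal (a ^ ?n / real ?n) * of_nat ?n = ennreal (a ^ ?n)"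
        using a by (simp add: ennreal_of_nat_eq_real_of_nat ennreal_mult'[symmetric] DIM_positive)
      then show ?thesis by (metis mult.assoc)
    qed
    finally show ?thesis using l by simp
  qed
  have "N1 = N2"
  proof (rule meas_eq_atMost)
    show "sets N1 = sets borel" by (simp add: N1_def)
    show "sets N2 = sets borel" by (simp add: N2_def)
    show "emeasure N1 {..a} = emeasure N2 {..a}" for a
      using N1A[of "{..a}"] N2A[of "{..a}"] key[of a] by simp
    show "emeasure N1 {..a} < \<infinity>" for a
    proof -
      have "emeasure N1 {..a} \<le> emeasure lborel (cball (0::'a) \<bar>a\<bar>)"
        using N1A[of "{..a}"] by (simp, intro emeasure_mono) auto
      also have "\<dots> < \<infinity>" by (rule emeasure_lborel_cball_finite)
      finally show ?thesis .
    qed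
  qed
  then show ?thesis using N1A[OF A] N2A[OF A] by simp
qed


lemma measurable_pol: "(\<lambda>x::'a::euclidean_space. (norm x, pol2 x)) \<in> borel \<rightarrow>\<^sub>M (borel \<Otimes>\<^sub>M sphere_measure)"
  by (intro measurable_Pair borel_measurable_norm measurable_pol2_sphere)

lemma polar_measure:
  "mur DIM('a) \<Otimes>\<^sub>M sphere_measure = distr lborel (borel \<Otimes>\<^sub>M sphere_measure) (\<lambda>x::'a::euclidean_space. (norm x, pol2 x))"
proof (rule pair_measure_eqI)
  show "sigma_finite_measure (mur DIM('a))" by (rule sigma_finite_mur)
  interpret finite_measure "sphere_measure :: 'a measure" by (rule finite_sphere_measure)
  show "sigma_finite_measure (sphere_measure :: 'a measure)" by unfold_locales
  show "sets (mur DIM('a) \<Otimes>\<^sub>M (sphere_measure :: 'a measure)) = sets (distr lborel (borel \<Otimes>\<^sub>M sphere_measure) (\<lambda>x::'a. (norm x, pol2 x)))"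
    by simp
  fix A B assume A: "A \<in> sets (mur DIM('a))" and B: "B \<in> sets (sphere_measure :: 'a measure)"
  have "emeasure (distr lborel (borel \<Otimes>\<^sub>M sphere_measure) (\<lambda>x::'a. (norm x, pol2 x))) (A \<times> B)
      = emeasure lborel ((\<lambda>x::'a. (norm x, pol2 x)) -` (A \<times> B))"
    using A B by (subst emeasure_distr) (auto intro: measurable_pol)
  also have "(\<lambda>x::'a. (norm x, pol2 x)) -` (A \<times> B) = {x. norm x \<in> A \<and> pol2 x \<in> B}" by auto
  finally show "emeasure (mur DIM('a)) A * emeasure sphere_measure B =
     emeasure (distr lborel (borel \<Otimes>\<^sub>M sphere_measure) (\<lambda>x::'a. (norm x, pol2 x))) (A \<times> B)"
    using polar_rect[OF B, of A] A by simp
qed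

lemma measurable_polmul: "(\<lambda>p. fst p *\<^sub>R snd p) \<in> (borel \<Otimes>\<^sub>M (sphere_measure :: 'a::euclidean_space measure)) \<rightarrow>\<^sub>M (borel :: 'a measure)"
proof -
  have "(\<lambda>p. snd p) \<in> (borel \<Otimes>\<^sub>M (sphere_measure :: 'a measure)) \<rightarrow>\<^sub>M (borel :: 'a measure)"
    by (rule measurable_compose[OF measurable_snd measurable_sphere_id])
  then show ?thesis by measurable
qed

lemma polar_nn_integral:
  fixes f :: "'a::euclidean_space \<Rightarrow> ennreal"
  assumes f[measurable]: "f \<in> borel_measurable borel"
  shows "(\<integral>\<^sup>+x. f x \<partial>lborel) = (\<integral>\<^sup>+u. (\<integral>\<^sup>+t. f (t *\<^sub>R u) \<partial>mur DIM('a)) \<partial>sphere_measure)"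
proof -
  interpret finite_measure "sphere_measure :: 'a measure" by (rule finite_sphere_measure)
  interpret mr: sigma_finite_measure "mur DIM('a)" by (rule sigma_finite_mur)
  interpret pair_sigma_finite "mur DIM('a)" "sphere_measure :: 'a measure" ..
  have g: "(\<lambda>p. f (fst p *\<^sub>R snd p)) \<in> borel_measurable (borel \<Otimes>\<^sub>M (sphere_measure :: 'a measure))"
    using measurable_compose[OF measurable_polmul f] by simp
  have g': "(\<lambda>p. f (fst p *\<^sub>R snd p)) \<in> borel_measurable (mur DIM('a) \<Otimes>\<^sub>M (sphere_measure :: 'a measure))"
    using g by (simp cong: measurable_cong_sets)
  have "(\<integral>\<^sup>+x. f x \<partial>lborel) = (\<integral>\<^sup>+x. f (fst (norm x, pol2 x) *\<^sub>R snd (norm x, pol2 x)) \<partial>lborel)"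
    by (simp add: pol2_recover)
  also have "\<dots> = (\<integral>\<^sup>+p. f (fst p *\<^sub>R snd p) \<partial>distr lborel (borel \<Otimes>\<^sub>M sphere_measure) (\<lambda>x::'a. (norm x, pol2 x)))"
  proof (rule nn_integral_distr[symmetric])
    show "(\<lambda>x::'a. (norm x, pol2 x)) \<in> lborel \<rightarrow>\<^sub>M borel \<Otimes>\<^sub>M sphere_measure"
      using measurable_pol by (simp cong: measurable_cong_sets)
    show "(\<lambda>p. f (fst p *\<^sub>R snd p)) \<in> borel_measurable (distr lborel (borel \<Otimes>\<^sub>M sphere_measure) (\<lambda>x::'a. (norm x, pol2 x)))"
      using g by (simp cong: measurable_cong_sets)
  qed
  also have "\<dots> = (\<integral>\<^sup>+p. f (fst p *\<^sub>R snd p) \<partial>(mur DIM('a) \<Otimes>\<^sub>M sphere_measure))"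
    by (simp add: polar_measure)
  also have "\<dots> = (\<integral>\<^sup>+u. (\<integral>\<^sup>+t. f (t *\<^sub>R u) \<partial>mur DIM('a)) \<partial>sphere_measure)"
    using nn_integral_snd[OF g'] by simp
  finally show ?thesis .
qed


locale splitb =
  fixes B1 :: "'a::euclidean_space set"
  assumes B1sub: "B1 \<subseteq> Basis" and B1ne: "B1 \<noteq> {}" and B1nf: "B1 \<noteq> Basis"
begin

definition Pp :: "'a \<Rightarrow> 'a" where "Pp x = (\<Sum>j\<in>B1. (x \<bullet> j) *\<^sub>R j)"
definition Qp :: "'a \<Rightarrow> 'a" where "Qp x = (\<Sum>j\<in>Basis - B1. (x \<bullet> j) *\<^sub>R j)"

lemma finB1: "finite B1" by (rule finite_subset[OF B1sub finite_Basis])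

lemma Pp_inner: assumes j: "j \<in> Basis" shows "Pp x \<bullet> j = (if j \<in> B1 then x \<bullet> j else 0)"
proof -
  have "Pp x \<bullet> j = (\<Sum>i\<in>B1. (x \<bullet> i) * (i \<bullet> j))" by (simp add: Pp_def inner_sum_left)
  also have "\<dots> = (\<Sum>i\<in>B1. if i = j then x \<bullet> i else 0)"
    using B1sub j by (intro sum.cong) (auto simp: inner_Basis)
  also have "\<dots> = (if j \<in> B1 then x \<bullet> j else 0)" using finB1 by (simp add: sum.delta')
  finally show ?thesis .
qed

lemma Qp_inner: assumes j: "j \<in> Basis" shows "Qp x \<bullet> j = (if j \<in> B1 then 0 else x \<bullet> j)"
proof -
  have "Qp x \<bullet> j = (\<Sum>i\<in>Basis - B1. (x \<bullet> i) * (i \<bullet> j))" by (simp add: Qp_def inner_sum_left)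
  also have "\<dots> = (\<Sum>i\<in>Basis - B1. if i = j then x \<bullet> i else 0)"
    using j by (intro sum.cong) (auto simp: inner_Basis)
  also have "\<dots> = (if j \<in> B1 then 0 else x \<bullet> j)" using j by (simp add: sum.delta')
  finally show ?thesis .
qed

lemma PQ_sum: "Pp x + Qp x = x"
proof (rule euclidean_eqI)
  fix j :: 'a assume "j \<in> Basis"
  then show "(Pp x + Qp x) \<bullet> j = x \<bullet> j" by (simp add: inner_add_left Pp_inner Qp_inner)
qed

lemma PQ_orth: "Pp x \<bullet> Qp y = 0"
  by (subst euclidean_inner, rule sum.neutral) (simp add: Pp_inner Qp_inner)

lemma norm_PQ: "(norm x)\<^sup>2 = (norm (Pp x))\<^sup>2 + (norm (Qp x))\<^sup>2"
proof -
  have "(norm (Pp x + Qp x))\<^sup>2 = (norm (Pp x))\<^sup>2 + (norm (Qp x))\<^sup>2"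
    by (rule norm_add_Pythagorean) (simp add: orthogonal_def PQ_orth)
  then show ?thesis by (simp add: PQ_sum)
qed

lemma norm_Pp_le: "norm (Pp x) \<le> norm x"
proof -
  have "(norm (Pp x))\<^sup>2 \<le> (norm x)\<^sup>2" using norm_PQ[of x] by simp
  then show ?thesis by (rule power2_le_imp_le) simp
qed

lemma norm_Qp_le: "norm (Qp x) \<le> norm x"
proof -
  have "(norm (Qp x))\<^sup>2 \<le> (norm x)\<^sup>2" using norm_PQ[of x] by simp
  then show ?thesis by (rule power2_le_imp_le) simp
qed

lemma linear_Pp: "linear Pp"
proof (rule linearI)
  show "Pp (x + y) = Pp x + Pp y" for x y
    by (simp add: Pp_def inner_add_left scaleR_add_left sum.distrib)
  show "Pp (c *\<^sub>R x) = c *\<^sub>R Pp x" for c x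
    by (simp add: Pp_def scaleR_sum_right)
qed

lemma linear_Qp: "linear Qp"
proof (rule linearI)
  show "Qp (x + y) = Qp x + Qp y" for x y
    by (simp add: Qp_def inner_add_left scaleR_add_left sum.distrib)
  show "Qp (c *\<^sub>R x) = c *\<^sub>R Qp x" for c x
    by (simp add: Qp_def scaleR_sum_right)
qed

lemma Pp_scale[simp]: "Pp (c *\<^sub>R x) = c *\<^sub>R Pp x"
  using linear_Pp by (simp add: linear_scale)

lemma Qp_scale[simp]: "Qp (c *\<^sub>R x) = c *\<^sub>R Qp x"
  using linear_Qp by (simp add: linear_scale)

lemma Pp_uminus[simp]: "Pp (- x) = - Pp x"
  using linear_Pp by (simp add: linear_neg)

lemma Qp_uminus[simp]: "Qp (- x) = - Qp x"
  using linear_Qp by (simp add: linear_neg)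

lemma Pp_cont[continuous_intros]: "continuous_on S (\<lambda>x. Pp x)"
  using linear_Pp by (simp add: linear_continuous_on linear_linear)

lemma Qp_cont[continuous_intros]: "continuous_on S (\<lambda>x. Qp x)"
  using linear_Qp by (simp add: linear_continuous_on linear_linear)

lemma Pp_borel[measurable]: "Pp \<in> borel_measurable borel"
  by (rule borel_measurable_continuous_onI) (rule Pp_cont)

lemma Qp_borel[measurable]: "Qp \<in> borel_measurable borel"
  by (rule borel_measurable_continuous_onI) (rule Qp_cont)

lemma Pp_Pp[simp]: "Pp (Pp x) = Pp x"
  by (rule euclidean_eqI) (simp add: Pp_inner)

lemma Qp_Pp[simp]: "Qp (Pp x) = 0"
  by (rule euclidean_eqI) (simp add: Qp_inner Pp_inner)

lemma Pp_Qp[simp]: "Pp (Qp x) = 0"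
  by (rule euclidean_eqI) (simp add: Qp_inner Pp_inner)

lemma Qp_Qp[simp]: "Qp (Qp x) = Qp x"
  by (rule euclidean_eqI) (simp add: Qp_inner)

definition Tsc :: "real \<Rightarrow> real \<Rightarrow> 'a \<Rightarrow> 'a" where
  "Tsc a b x = (\<Sum>j\<in>Basis. ((if j \<in> B1 then a else b) * (x \<bullet> j)) *\<^sub>R j)"

lemma Tsc_inner: assumes j: "j \<in> Basis" shows "Tsc a b x \<bullet> j = (if j \<in> B1 then a else b) * (x \<bullet> j)"
proof -
  have "Tsc a b x \<bullet> j = (\<Sum>i\<in>Basis. ((if i \<in> B1 then a else b) * (x \<bullet> i)) * (i \<bullet> j))" by (simp add: Tsc_def inner_sum_left)
  also have "\<dots> = (\<Sum>i\<in>Basis. if i = j then (if i \<in> B1 then a else b) * (x \<bullet> i) else 0)"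
    using j by (intro sum.cong) (auto simp: inner_Basis)
  also have "\<dots> = (if j \<in> B1 then a else b) * (x \<bullet> j)" using j by (simp add: sum.delta')
  finally show ?thesis .
qed

lemma Pp_Tsc: "Pp (Tsc a b x) = a *\<^sub>R Pp x"
  by (rule euclidean_eqI) (simp add: Pp_inner Tsc_inner)

lemma Qp_Tsc: "Qp (Tsc a b x) = b *\<^sub>R Qp x"
  by (rule euclidean_eqI) (simp add: Qp_inner Tsc_inner)

lemma card_B2: "card (Basis - B1) = DIM('a) - card B1"
  using B1sub finB1 by (simp add: card_Diff_subset)

lemma prod_Tsc: "(\<Prod>j\<in>Basis. \<bar>if j \<in> B1 then a else b\<bar>) = \<bar>a\<bar> ^ card B1 * \<bar>b\<bar> ^ (DIM('a) - card B1)"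
proof -
  have "(\<Prod>j\<in>Basis. \<bar>if j \<in> B1 then a else b\<bar>) = (\<Prod>j\<in>Basis - B1. \<bar>if j \<in> B1 then a else b\<bar>) * (\<Prod>j\<in>B1. \<bar>if j \<in> B1 then a else b\<bar>)"
    using B1sub by (simp add: prod.subset_diff)
  also have "\<dots> = \<bar>b\<bar> ^ (DIM('a) - card B1) * \<bar>a\<bar> ^ card B1"
    using card_B2 by simp
  finally show ?thesis by (simp only: mult.commute)
qed

lemma lborel_Tsc_emeasure:
  assumes a: "a > 0" and b: "b > 0" and A: "A \<in> sets borel"
  shows "emeasure lborel A = ennreal (a ^ card B1 * b ^ (DIM('a) - card B1)) * emeasure lborel {x. Tsc a b x \<in> A}"
proof -
  let ?c = "\<lambda>j::'a. if j \<in> B1 then a else b"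
  have c: "\<And>j. j \<in> Basis \<Longrightarrow> ?c j \<noteq> 0" using a b by auto
  have eq: "lborel = density (distr lborel borel (\<lambda>x::'a. 0 + (\<Sum>j\<in>Basis. (?c j * (x \<bullet> j)) *\<^sub>R j))) (\<lambda>_. (\<Prod>j\<in>Basis. \<bar>?c j\<bar>))"
    by (rule lborel_affine_euclidean[OF c])
  have T: "(\<lambda>x::'a. 0 + (\<Sum>j\<in>Basis. (?c j * (x \<bullet> j)) *\<^sub>R j)) = Tsc a b"
    by (auto simp: Tsc_def)
  have Tm[measurable]: "Tsc a b \<in> borel_measurable borel" unfolding Tsc_def by measurable
  have calc: "emeasure (density (distr lborel borel (Tsc a b)) (\<lambda>_. ennreal (\<bar>a\<bar> ^ card B1 * \<bar>b\<bar> ^ (DIM('a) - card B1)))) A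
        = ennreal (a ^ card B1 * b ^ (DIM('a) - card B1)) * emeasure lborel {x. Tsc a b x \<in> A}"
  proof -
    let ?c = "ennreal (\<bar>a\<bar> ^ card B1 * \<bar>b\<bar> ^ (DIM('a) - card B1))"
    have pre: "{x. Tsc a b x \<in> A} \<in> sets lborel"
      using measurable_sets_borel[OF Tm A] by (simp add: vimage_def)
    have "emeasure (density (distr lborel borel (Tsc a b)) (\<lambda>_. ?c)) A = (\<integral>\<^sup>+x. ?c * indicator A x \<partial>distr lborel borel (Tsc a b))"
      using A by (subst emeasure_density) auto
    also have "\<dots> = (\<integral>\<^sup>+x. ?c * indicator A (Tsc a b x) \<partial>lborel)"
      using A by (subst nn_integral_distr) auto
    also have "\<dots> = (\<integral>\<^sup>+x. ?c * indicator {x. Tsc a b x \<in> A} x \<partial>lborel)"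
      by (intro nn_integral_cong) (simp add: indicator_def)
    also have "\<dots> = ?c * emeasure lborel {x. Tsc a b x \<in> A}"
      using pre by (rule nn_integral_cmult_indicator)
    finally show ?thesis using a b by simp
  qed
  have eq2: "lborel = density (distr lborel borel (Tsc a b)) (\<lambda>_. ennreal (\<bar>a\<bar> ^ card B1 * \<bar>b\<bar> ^ (DIM('a) - card B1)))"
    using eq unfolding T prod_Tsc .
  show ?thesis by (rule trans[OF arg_cong[where f="\<lambda>M. emeasure M A", OF eq2] calc])
qed

end


lemma dens_atMost:
  assumes p: "p > 0" and c: "c \<ge> 0"
  shows "emeasure (density lborel (\<lambda>t. ennreal (c * t powr (p - 1)) * indicator {0..1} t)) {..a}
       = (if a < 0 then 0 else ennreal (c * (min a 1 powr p / p)))"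
proof -
  have "emeasure (density lborel (\<lambda>t. ennreal (c * t powr (p - 1)) * indicator {0..1} t)) {..a}
     = (\<integral>\<^sup>+t. ennreal (c * t powr (p - 1)) * indicator {0..min a 1} t \<partial>lborel)"
    by (subst emeasure_density) (auto intro!: nn_integral_cong simp: indicator_def)
  also have "\<dots> = (if a < 0 then 0 else ennreal (c * (min a 1 powr p / p)))"
  proof (cases "a < 0")
    case True then show ?thesis by (simp add: indicator_def)
  next
    case False
    have "((\<lambda>t. t powr (p - 1)) has_integral (min a 1 powr (p - 1 + 1) / (p - 1 + 1))) {0..min a 1}"
      using p False by (intro has_integral_powr_from_0) auto
    then have "((\<lambda>t. c * t powr (p - 1)) has_integral (c * (min a 1 powr (p - 1 + 1) / (p - 1 + 1)))) {0..min a 1}"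
      by (rule has_integral_mult_right)
    then have "(\<integral>\<^sup>+t. ennreal (c * t powr (p - 1)) * indicator {0..min a 1} t \<partial>lborel) = ennreal (c * (min a 1 powr (p - 1 + 1) / (p - 1 + 1)))"
      using c by (intro nn_integral_has_integral_lebesgue') auto
    then show ?thesis using False by simp
  qed
  finally show ?thesis .
qed

lemma emeasure_distr_dens_ind:
  fixes E :: "'a::euclidean_space set" and g :: "'a \<Rightarrow> real"
  assumes E: "E \<in> sets borel" and g: "g \<in> borel_measurable borel" and X: "X \<in> sets borel"
  shows "emeasure (distr (density lborel (indicator E)) borel g) X = emeasure lborel (E \<inter> g -` X)"
proof -
  have gX: "g -` X \<in> sets borel" by (rule measurable_sets_borel[OF g X])
  have "emeasure (distr (density lborel (indicator E)) borel g) X = emeasure (density lborel (indicator E)) (g -` X)"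
    using X g by (subst emeasure_distr) auto
  also have "\<dots> = (\<integral>\<^sup>+x. indicator E x * indicator (g -` X) x \<partial>lborel)"
    using gX E by (subst emeasure_density) auto
  also have "\<dots> = (\<integral>\<^sup>+x. indicator (E \<inter> g -` X) x \<partial>lborel)"
    by (rule nn_integral_cong) (simp add: indicator_inter_arith)
  also have "\<dots> = emeasure lborel (E \<inter> g -` X)"
    by (rule nn_integral_indicator) (simp add: sets.Int gX E)
  finally show ?thesis .
qed

lemma emeasure_density_const:
  assumes "X \<in> sets M"
  shows "emeasure (density M (\<lambda>_. c)) X = c * emeasure M X"
  using assms by (subst emeasure_density) (auto simp: nn_integral_cmult_indicator mult.commute[of _ c])

context splitb
begin

definition D1 :: "'a set" where "D1 = {x. norm (Pp x) \<le> 1 \<and> norm (Qp x) \<le> 1}"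

definition kk :: nat where "kk = card B1"
definition mm :: nat where "mm = DIM('a) - card B1"

lemma kk_pos: "kk > 0" using B1ne finB1 by (simp add: kk_def card_gt_0_iff)

lemma mm_pos: "mm > 0"
proof -
  have "card B1 < DIM('a)" using B1sub B1nf by (simp add: psubset_card_mono psubsetI)
  then show ?thesis by (simp add: mm_def)
qed

lemma D1_borel[measurable]: "D1 \<in> sets borel"
  unfolding D1_def by measurable

lemma D1_sub: "D1 \<subseteq> cball 0 2"
proof
  fix x assume "x \<in> D1"
  then have "norm (Pp x) \<le> 1" "norm (Qp x) \<le> 1" by (auto simp: D1_def)
  moreover have "norm x \<le> norm (Pp x) + norm (Qp x)"
    using norm_triangle_ineq[of "Pp x" "Qp x"] by (simp add: PQ_sum)
  ultimately show "x \<in> cball 0 2" by simp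
qed

lemma D1_fin: "emeasure lborel D1 < \<infinity>"
  using emeasure_mono[OF D1_sub, of lborel] emeasure_lborel_cball_finite[of "0::'a" 2]
  by (simp add: le_less_trans)

lemma D1_pos: "emeasure lborel D1 > 0"
proof -
  have "ball 0 1 \<subseteq> D1"
  proof
    fix x :: 'a assume "x \<in> ball 0 1"
    then have "norm x < 1" by simp
    then show "x \<in> D1" using norm_Pp_le[of x] norm_Qp_le[of x] by (simp add: D1_def)
  qed
  then have "emeasure lborel (ball (0::'a) 1) \<le> emeasure lborel D1" by (intro emeasure_mono) auto
  moreover have "emeasure lborel (ball (0::'a) 1) > 0"
  proof -
    have "measure lborel (ball (0::'a) 1) > 0" using content_ball_gt_0_iff[of "0::'a" 1] by simp
    moreover have "emeasure lborel (ball (0::'a) 1) = ennreal (measure lborel (ball (0::'a) 1))"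
      using emeasure_lborel_ball_finite[of "0::'a" 1] by (intro emeasure_eq_ennreal_measure) simp
    ultimately show ?thesis by (simp only: ennreal_less_zero_iff)
  qed
  ultimately show ?thesis by simp
qed

lemma rect_scale:
  assumes a: "a > 0" and b: "b > 0"
  shows "emeasure lborel {x. norm (Pp x) \<le> a \<and> norm (Qp x) \<le> b} = ennreal (a ^ kk * b ^ mm) * emeasure lborel D1"
proof -
  have "emeasure lborel {x. norm (Pp x) \<le> a \<and> norm (Qp x) \<le> b}
     = ennreal (a ^ kk * b ^ mm) * emeasure lborel {x. Tsc a b x \<in> {x. norm (Pp x) \<le> a \<and> norm (Qp x) \<le> b}}"
    unfolding kk_def mm_def by (rule lborel_Tsc_emeasure[OF a b]) measurable
  also have "{x. Tsc a b x \<in> {x. norm (Pp x) \<le> a \<and> norm (Qp x) \<le> b}} = D1"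
    using a b by (auto simp: D1_def Pp_Tsc Qp_Tsc)
  finally show ?thesis .
qed

lemma null_hyper:
  assumes j: "j \<in> Basis"
  shows "{x::'a. j \<bullet> x = 0} \<in> null_sets lborel"
proof -
  have "negligible {x::'a. j \<bullet> x = 0}" using j by (intro negligible_hyperplane) auto
  then have "{x::'a. j \<bullet> x = 0} \<in> null_sets lebesgue" by (simp add: negligible_iff_null_sets)
  moreover have "{x::'a. j \<bullet> x = 0} \<in> sets lborel" by simp
  ultimately show ?thesis using null_sets_completion_iff by blast
qed

lemma rect_null:
  assumes "a \<le> 0 \<or> b \<le> 0" and E: "E \<in> sets borel"
  shows "emeasure lborel (E \<inter> {x. norm (Pp x) \<le> a \<and> norm (Qp x) \<le> b}) = 0"
proof -
  obtain j1 where j1: "j1 \<in> B1" using B1ne by blast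
  obtain j2 where j2: "j2 \<in> Basis" "j2 \<notin> B1" using B1nf B1sub by blast
  show ?thesis
  proof (cases "a \<le> 0")
    case True
    have sub: "E \<inter> {x. norm (Pp x) \<le> a \<and> norm (Qp x) \<le> b} \<subseteq> {x::'a. j1 \<bullet> x = 0}"
    proof
      fix x assume "x \<in> E \<inter> {x. norm (Pp x) \<le> a \<and> norm (Qp x) \<le> b}"
      then have "Pp x = 0" using True by (metis IntD2 mem_Collect_eq norm_le_zero_iff order.trans)
      then have "Pp x \<bullet> j1 = 0" by simp
      then show "x \<in> {x. j1 \<bullet> x = 0}" using j1 B1sub Pp_inner[of j1 x] by (auto simp: inner_commute)
    qed
    show ?thesis
      using null_sets_subset[OF null_hyper[of j1] _ sub] j1 B1sub E by auto
  next
    case False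
    then have bb: "b \<le> 0" using assms by auto
    have sub: "E \<inter> {x. norm (Pp x) \<le> a \<and> norm (Qp x) \<le> b} \<subseteq> {x::'a. j2 \<bullet> x = 0}"
    proof
      fix x assume "x \<in> E \<inter> {x. norm (Pp x) \<le> a \<and> norm (Qp x) \<le> b}"
      then have "Qp x = 0" using bb by (metis IntD2 mem_Collect_eq norm_le_zero_iff order.trans)
      then have "Qp x \<bullet> j2 = 0" by simp
      then show "x \<in> {x. j2 \<bullet> x = 0}" using j2 Qp_inner[of j2 x] by (auto simp: inner_commute)
    qed
    show ?thesis
      using null_sets_subset[OF null_hyper[of j2] _ sub] j2 E by auto
  qed
qed

end


lemma emeasure_distr_dens_ind':
  fixes E :: "'a::euclidean_space set"
  assumes E: "E \<in> sets borel" and g: "g \<in> borel \<rightarrow>\<^sub>M N" and X: "X \<in> sets N"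
  shows "emeasure (distr (density lborel (indicator E)) N g) X = emeasure lborel (E \<inter> g -` X)"
proof -
  have gX: "g -` X \<in> sets borel" using measurable_sets[OF g X] by simp
  have "emeasure (distr (density lborel (indicator E)) N g) X = emeasure (density lborel (indicator E)) (g -` X)"
    using X g by (subst emeasure_distr) (auto cong: measurable_cong_sets)
  also have "\<dots> = (\<integral>\<^sup>+x. indicator E x * indicator (g -` X) x \<partial>lborel)"
    using gX E by (subst emeasure_density) auto
  also have "\<dots> = (\<integral>\<^sup>+x. indicator (E \<inter> g -` X) x \<partial>lborel)"
    by (rule nn_integral_cong) (simp add: indicator_inter_arith)
  also have "\<dots> = emeasure lborel (E \<inter> g -` X)"
    by (rule nn_integral_indicator) (simp add: sets.Int gX E)
  finally show ?thesis .
qed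

lemma sigma_finite_dens: "sigma_finite_measure (density lborel (\<lambda>t::real. ennreal (c * t powr p) * indicator {0..1} t))"
  by (subst sigma_finite_measure.sigma_finite_iff_density_finite[OF sigma_finite_lborel]) (auto intro!: AE_I2 split: split_indicator)

context splitb
begin

definition Cc :: real where "Cc = real kk * real mm * measure lborel D1"

definition M1 :: "real measure" where
  "M1 = density lborel (\<lambda>t. ennreal (1 * t powr (real kk - 1)) * indicator {0..1} t)"
definition M2 :: "real measure" where
  "M2 = density lborel (\<lambda>t. ennreal (Cc * t powr (real mm - 1)) * indicator {0..1} t)"

lemma sets_M1[simp, measurable_cong]: "sets M1 = sets borel" by (simp add: M1_def)
lemma sets_M2[simp, measurable_cong]: "sets M2 = sets borel" by (simp add: M2_def)

lemma Cc_pos: "Cc > 0"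
proof -
  have "measure lborel D1 > 0"
    using D1_pos D1_fin emeasure_eq_ennreal_measure[of lborel D1] by (simp add: less_top)
  then show ?thesis using kk_pos mm_pos by (simp add: Cc_def)
qed

lemma D1_ennreal: "emeasure lborel D1 = ennreal (measure lborel D1)"
  using D1_fin by (intro emeasure_eq_ennreal_measure) simp

lemma G_rect: "emeasure lborel (D1 \<inter> {x. norm (Pp x) \<le> a \<and> norm (Qp x) \<le> b}) = emeasure M1 {..a} * emeasure M2 {..b}"
proof -
  have M1a: "emeasure M1 {..a} = (if a < 0 then 0 else ennreal (1 * (min a 1 powr real kk / real kk)))"
    unfolding M1_def using kk_pos by (intro dens_atMost) auto
  have M2b: "emeasure M2 {..b} = (if b < 0 then 0 else ennreal (Cc * (min b 1 powr real mm / real mm)))"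
    unfolding M2_def using mm_pos Cc_pos by (intro dens_atMost) auto
  show ?thesis
  proof (cases "a \<le> 0 \<or> b \<le> 0")
    case True
    have "emeasure M1 {..a} * emeasure M2 {..b} = 0"
      using True M1a M2b kk_pos mm_pos by auto
    then show ?thesis using rect_null[OF True D1_borel] by simp
  next
    case False
    then have a: "a > 0" and b: "b > 0" by auto
    have "D1 \<inter> {x. norm (Pp x) \<le> a \<and> norm (Qp x) \<le> b} = {x. norm (Pp x) \<le> min a 1 \<and> norm (Qp x) \<le> min b 1}"
      by (auto simp: D1_def)
    then have "emeasure lborel (D1 \<inter> {x. norm (Pp x) \<le> a \<and> norm (Qp x) \<le> b})
       = ennreal (min a 1 ^ kk * min b 1 ^ mm) * ennreal (measure lborel D1)"
      using rect_scale[of "min a 1" "min b 1"] a b D1_ennreal by simp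
    also have "\<dots> = ennreal (min a 1 ^ kk * min b 1 ^ mm * measure lborel D1)"
      using a b by (intro ennreal_mult[symmetric]) auto
    also have "min a 1 ^ kk * min b 1 ^ mm * measure lborel D1 = (min a 1 powr real kk / real kk) * (Cc * (min b 1 powr real mm / real mm))"
    proof -
      have pa: "min a 1 powr real kk = min a 1 ^ kk" using a by (simp add: powr_realpow)
      have pb: "min b 1 powr real mm = min b 1 ^ mm" using b by (simp add: powr_realpow)
      have gen: "X * Y * m = (X / x) * (x * y * m * (Y / y))" if "x > 0" "y > 0" for X Y m x y :: real
        using that by (simp add: field_simps)
      show ?thesis unfolding Cc_def pa pb using kk_pos mm_pos by (intro gen) auto
    qed
    also have "ennreal \<dots> = ennreal (min a 1 powr real kk / real kk) * ennreal (Cc * (min b 1 powr real mm / real mm))"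
      using Cc_pos by (intro ennreal_mult) auto
    also have "\<dots> = emeasure M1 {..a} * emeasure M2 {..b}"
      using a b M1a M2b by simp
    finally show ?thesis .
  qed
qed

lemma H_rect1:
  assumes A: "A \<in> sets borel"
  shows "emeasure lborel (D1 \<inter> {x. norm (Qp x) \<le> b} \<inter> (\<lambda>x. norm (Pp x)) -` A) = emeasure M1 A * emeasure M2 {..b}"
proof -
  let ?E = "D1 \<inter> {x. norm (Qp x) \<le> b}"
  have E: "?E \<in> sets borel" by measurable
  define N1 where "N1 = distr (density lborel (indicator ?E)) borel (\<lambda>x. norm (Pp x))"
  define N2 where "N2 = density M1 (\<lambda>_. emeasure M2 {..b})"
  have N1X: "emeasure N1 X = emeasure lborel (?E \<inter> (\<lambda>x. norm (Pp x)) -` X)" if "X \<in> sets borel" for X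
    unfolding N1_def using that E by (intro emeasure_distr_dens_ind') auto
  have N2X: "emeasure N2 X = emeasure M2 {..b} * emeasure M1 X" if "X \<in> sets borel" for X
    unfolding N2_def using that by (intro emeasure_density_const) simp
  have "N1 = N2"
  proof (rule meas_eq_atMost)
    show "sets N1 = sets borel" "sets N2 = sets borel" by (auto simp: N1_def N2_def)
    fix a
    have "?E \<inter> (\<lambda>x. norm (Pp x)) -` {..a} = D1 \<inter> {x. norm (Pp x) \<le> a \<and> norm (Qp x) \<le> b}" by auto
    then show "emeasure N1 {..a} = emeasure N2 {..a}"
      using N1X[of "{..a}"] N2X[of "{..a}"] G_rect[of a b] by (simp add: mult.commute)
    have "emeasure N1 {..a} \<le> emeasure lborel D1"
      using N1X[of "{..a}"] by (simp, intro emeasure_mono) auto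
    then show "emeasure N1 {..a} < \<infinity>" using D1_fin by (simp add: le_less_trans)
  qed
  then show ?thesis using N1X[OF A] N2X[OF A] by (simp add: mult.commute)
qed

lemma H_rect:
  assumes A: "A \<in> sets borel" and B: "B \<in> sets borel"
  shows "emeasure lborel (D1 \<inter> {x. norm (Pp x) \<in> A \<and> norm (Qp x) \<in> B}) = emeasure M1 A * emeasure M2 B"
proof -
  let ?E = "D1 \<inter> (\<lambda>x. norm (Pp x)) -` A"
  have E: "?E \<in> sets borel" using A by measurable
  define N1 where "N1 = distr (density lborel (indicator ?E)) borel (\<lambda>x. norm (Qp x))"
  define N2 where "N2 = density M2 (\<lambda>_. emeasure M1 A)"
  have N1X: "emeasure N1 X = emeasure lborel (?E \<inter> (\<lambda>x. norm (Qp x)) -` X)" if "X \<in> sets borel" for X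
    unfolding N1_def using that E by (intro emeasure_distr_dens_ind') auto
  have N2X: "emeasure N2 X = emeasure M1 A * emeasure M2 X" if "X \<in> sets borel" for X
    unfolding N2_def using that by (intro emeasure_density_const) simp
  have "N1 = N2"
  proof (rule meas_eq_atMost)
    show "sets N1 = sets borel" "sets N2 = sets borel" by (auto simp: N1_def N2_def)
    fix b
    have "?E \<inter> (\<lambda>x. norm (Qp x)) -` {..b} = D1 \<inter> {x. norm (Qp x) \<le> b} \<inter> (\<lambda>x. norm (Pp x)) -` A" by auto
    then show "emeasure N1 {..b} = emeasure N2 {..b}"
      using N1X[of "{..b}"] N2X[of "{..b}"] H_rect1[OF A, of b] by simp
    have "emeasure N1 {..b} \<le> emeasure lborel D1"
      using N1X[of "{..b}"] by (simp, intro emeasure_mono) auto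
    then show "emeasure N1 {..b} < \<infinity>" using D1_fin by (simp add: le_less_trans)
  qed
  moreover have "?E \<inter> (\<lambda>x. norm (Qp x)) -` B = D1 \<inter> {x. norm (Pp x) \<in> A \<and> norm (Qp x) \<in> B}" by auto
  ultimately show ?thesis using N1X[OF B] N2X[OF B] by simp
qed

definition piPQ :: "'a \<Rightarrow> real \<times> real" where "piPQ x = (norm (Pp x), norm (Qp x))"

lemma piPQ_meas[measurable]: "piPQ \<in> borel \<rightarrow>\<^sub>M (borel \<Otimes>\<^sub>M borel)"
  unfolding piPQ_def by measurable

lemma push_measure: "M1 \<Otimes>\<^sub>M M2 = distr (density lborel (indicator D1)) (borel \<Otimes>\<^sub>M borel) piPQ"
proof (rule pair_measure_eqI)
  show "sigma_finite_measure M1" unfolding M1_def by (rule sigma_finite_dens)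
  show "sigma_finite_measure M2" unfolding M2_def by (rule sigma_finite_dens)
  show "sets (M1 \<Otimes>\<^sub>M M2) = sets (distr (density lborel (indicator D1)) (borel \<Otimes>\<^sub>M borel) piPQ)"
    by simp
  fix A B assume A: "A \<in> sets M1" and B: "B \<in> sets M2"
  have "emeasure (distr (density lborel (indicator D1)) (borel \<Otimes>\<^sub>M borel) piPQ) (A \<times> B) = emeasure lborel (D1 \<inter> piPQ -` (A \<times> B))"
    using A B by (intro emeasure_distr_dens_ind') auto
  also have "D1 \<inter> piPQ -` (A \<times> B) = D1 \<inter> {x. norm (Pp x) \<in> A \<and> norm (Qp x) \<in> B}"
    by (auto simp: piPQ_def)
  finally show "emeasure M1 A * emeasure M2 B = emeasure (distr (density lborel (indicator D1)) (borel \<Otimes>\<^sub>M borel) piPQ) (A \<times> B)"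
    using H_rect A B by simp
qed

lemma push_integral:
  assumes h[measurable]: "h \<in> borel_measurable (borel \<Otimes>\<^sub>M borel)"
  shows "(\<integral>\<^sup>+x. indicator D1 x * h (norm (Pp x), norm (Qp x)) \<partial>lborel)
       = (\<integral>\<^sup>+t. ennreal (t powr (real kk - 1)) * indicator {0..1} t *
            (\<integral>\<^sup>+s. ennreal (Cc * s powr (real mm - 1)) * indicator {0..1} s * h (t, s) \<partial>lborel) \<partial>lborel)"
proof -
  interpret m2: sigma_finite_measure M2 unfolding M2_def by (rule sigma_finite_dens)
  have "(\<integral>\<^sup>+x. indicator D1 x * h (norm (Pp x), norm (Qp x)) \<partial>lborel) = (\<integral>\<^sup>+x. h (piPQ x) \<partial>density lborel (indicator D1))"
    by (subst nn_integral_density) (auto simp: piPQ_def)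
  also have "\<dots> = (\<integral>\<^sup>+p. h p \<partial>distr (density lborel (indicator D1)) (borel \<Otimes>\<^sub>M borel) piPQ)"
    by (subst nn_integral_distr) (auto cong: measurable_cong_sets)
  also have "\<dots> = (\<integral>\<^sup>+p. h p \<partial>(M1 \<Otimes>\<^sub>M M2))"
    by (simp add: push_measure)
  also have "\<dots> = (\<integral>\<^sup>+t. (\<integral>\<^sup>+s. h (t, s) \<partial>M2) \<partial>M1)"
    by (rule m2.nn_integral_fst[symmetric]) (simp cong: measurable_cong_sets)
  also have "\<dots> = (\<integral>\<^sup>+t. ennreal (t powr (real kk - 1)) * indicator {0..1} t *
            (\<integral>\<^sup>+s. ennreal (Cc * s powr (real mm - 1)) * indicator {0..1} s * h (t, s) \<partial>lborel) \<partial>lborel)"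
  proof -
    have inner: "(\<integral>\<^sup>+s. h (t, s) \<partial>M2) = (\<integral>\<^sup>+s. ennreal (Cc * s powr (real mm - 1)) * indicator {0..1} s * h (t, s) \<partial>lborel)" for t
      unfolding M2_def by (subst nn_integral_density) auto
    have "(\<integral>\<^sup>+t. (\<integral>\<^sup>+s. h (t, s) \<partial>M2) \<partial>M1) = (\<integral>\<^sup>+t. (\<integral>\<^sup>+s. ennreal (Cc * s powr (real mm - 1)) * indicator {0..1} s * h (t, s) \<partial>lborel) \<partial>M1)"
      by (simp only: inner)
    also have "\<dots> = (\<integral>\<^sup>+t. ennreal (1 * t powr (real kk - 1)) * indicator {0..1} t *
            (\<integral>\<^sup>+s. ennreal (Cc * s powr (real mm - 1)) * indicator {0..1} s * h (t, s) \<partial>lborel) \<partial>lborel)"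
      unfolding M1_def by (subst nn_integral_density) auto
    finally show ?thesis by simp
  qed
  finally show ?thesis .
qed

end


context splitb
begin

definition Kc :: "real \<Rightarrow> 'a set" where "Kc r = {x. norm (Pp x) \<le> r \<and> norm (Qp x) \<le> 1}"

definition rho :: "real \<Rightarrow> 'a \<Rightarrow> real" where
  "rho r u = (if r * norm (Qp u) \<le> norm (Pp u) then r / norm (Pp u) else 1 / norm (Qp u))"

lemma Qp_span: "v \<in> span B1 \<Longrightarrow> Qp v = 0"
proof -
  assume v: "v \<in> span B1"
  have "Qp j = 0" if "j \<in> B1" for j
    by (rule euclidean_eqI) (use that B1sub in \<open>auto simp: Qp_inner inner_Basis\<close>)
  then show ?thesis using linear_eq_0_on_span[OF linear_Qp _ v] by blast
qed

lemma Pp_span: "v \<in> span B1 \<Longrightarrow> Pp v = v"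
  using PQ_sum[of v] Qp_span[of v] by simp

lemma Pp_in_span: "Pp x \<in> span B1"
  unfolding Pp_def by (intro span_sum span_mul span_base) 

lemma u_ne: "norm u = 1 \<Longrightarrow> norm (Pp u) = 0 \<Longrightarrow> norm (Qp u) \<noteq> 0"
  using PQ_sum[of u] by auto

lemma Kc_closed: "closed (Kc r)"
  unfolding Kc_def by (intro closed_Collect_conj closed_Collect_le continuous_intros)

lemma Kc_bounded: "Kc r \<subseteq> cball 0 (r + 1)"
proof
  fix x assume "x \<in> Kc r"
  then have "norm (Pp x) \<le> r" "norm (Qp x) \<le> 1" by (auto simp: Kc_def)
  moreover have "norm x \<le> norm (Pp x) + norm (Qp x)"
    using norm_triangle_ineq[of "Pp x" "Qp x"] by (simp add: PQ_sum)
  ultimately show "x \<in> cball 0 (r + 1)" by simp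
qed

lemma Kc_convex: "convex (Kc r)"
proof (rule convexI)
  fix x y and u v :: real assume x: "x \<in> Kc r" and y: "y \<in> Kc r" and uv: "0 \<le> u" "0 \<le> v" "u + v = 1"
  have P: "Pp (u *\<^sub>R x + v *\<^sub>R y) = u *\<^sub>R Pp x + v *\<^sub>R Pp y"
    using linear_Pp by (simp add: linear_add)
  have Q: "Qp (u *\<^sub>R x + v *\<^sub>R y) = u *\<^sub>R Qp x + v *\<^sub>R Qp y"
    using linear_Qp by (simp add: linear_add)
  have "norm (u *\<^sub>R Pp x + v *\<^sub>R Pp y) \<le> u * norm (Pp x) + v * norm (Pp y)"
    using norm_triangle_ineq[of "u *\<^sub>R Pp x" "v *\<^sub>R Pp y"] uv by simp
  also have "\<dots> \<le> u * r + v * r"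
    using x y uv by (intro add_mono mult_left_mono) (auto simp: Kc_def)
  finally have 1: "norm (Pp (u *\<^sub>R x + v *\<^sub>R y)) \<le> r" using uv P by (simp add: distrib_right[symmetric])
  have "norm (u *\<^sub>R Qp x + v *\<^sub>R Qp y) \<le> u * norm (Qp x) + v * norm (Qp y)"
    using norm_triangle_ineq[of "u *\<^sub>R Qp x" "v *\<^sub>R Qp y"] uv by simp
  also have "\<dots> \<le> u * 1 + v * 1"
    using x y uv by (intro add_mono mult_left_mono) (auto simp: Kc_def)
  finally have 2: "norm (Qp (u *\<^sub>R x + v *\<^sub>R y)) \<le> 1" using uv Q by simp
  show "u *\<^sub>R x + v *\<^sub>R y \<in> Kc r" using 1 2 by (simp add: Kc_def)
qed

lemma Kc_ball: "0 < r \<Longrightarrow> r \<le> 1 \<Longrightarrow> ball 0 r \<subseteq> Kc r"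
proof
  fix x :: 'a assume r: "0 < r" "r \<le> 1" and "x \<in> ball 0 r"
  then have "norm x < r" by simp
  then show "x \<in> Kc r" using norm_Pp_le[of x] norm_Qp_le[of x] r by (simp add: Kc_def)
qed

lemma Kc_convex_body: "0 < r \<Longrightarrow> r \<le> 1 \<Longrightarrow> convex_body (Kc r)"
proof -
  assume r: "0 < r" "r \<le> 1"
  have "compact (Kc r)"
    by (simp add: compact_eq_bounded_closed Kc_closed bounded_subset[OF bounded_cball Kc_bounded])
  moreover have "0 \<in> interior (Kc r)"
    using interior_maximal[OF Kc_ball[OF r] open_ball] r by (meson centre_in_ball subsetD)
  ultimately show ?thesis using Kc_convex by (auto simp: convex_body_def)
qed

lemma Kc_symm: "origin_symmetric (Kc r)"
proof -
  have "uminus ` Kc r \<subseteq> Kc r" by (auto simp: Kc_def)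
  moreover have "Kc r \<subseteq> uminus ` Kc r"
  proof
    fix x assume "x \<in> Kc r"
    then have "- x \<in> Kc r" by (simp add: Kc_def)
    then show "x \<in> uminus ` Kc r" by (metis image_eqI minus_minus)
  qed
  ultimately show ?thesis by (auto simp: origin_symmetric_def)
qed

lemma rho_set:
  assumes r: "0 < r" "r \<le> 1" and u: "norm u = 1"
  shows "{t. t > 0 \<and> t *\<^sub>R u \<in> Kc r} = {0<..rho r u}" and "rho r u > 0"
proof -
  have "{t. t > 0 \<and> t *\<^sub>R u \<in> Kc r} = {0<..rho r u} \<and> rho r u > 0"
  proof (cases "r * norm (Qp u) \<le> norm (Pp u)")
    case True
    have pP: "norm (Pp u) > 0"
    proof (rule ccontr)
      assume "\<not> norm (Pp u) > 0"
      then have "norm (Pp u) = 0" by simp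
      then have "norm (Qp u) > 0" using u_ne[OF u] by simp
      then have "r * norm (Qp u) > 0" using r by simp
      with True \<open>norm (Pp u) = 0\<close> show False by simp
    qed
    have rh: "rho r u = r / norm (Pp u)" using True by (simp add: rho_def)
    have "t *\<^sub>R u \<in> Kc r \<longleftrightarrow> t \<le> r / norm (Pp u)" if t: "t > 0" for t
    proof
      assume "t *\<^sub>R u \<in> Kc r"
      then have "t * norm (Pp u) \<le> r" using t by (simp add: Kc_def)
      then show "t \<le> r / norm (Pp u)" using pP by (simp add: field_simps)
    next
      assume tl: "t \<le> r / norm (Pp u)"
      then have 1: "t * norm (Pp u) \<le> r" using pP by (simp add: field_simps)
      have "t * (r * norm (Qp u)) \<le> t * norm (Pp u)" using True t by (intro mult_left_mono) auto
      then have "r * (t * norm (Qp u)) \<le> r * 1" using 1 by (simp add: algebra_simps)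
      then have 2: "t * norm (Qp u) \<le> 1" using r by simp
      show "t *\<^sub>R u \<in> Kc r" using 1 2 t by (simp add: Kc_def)
    qed
    then show ?thesis using rh r pP by auto
  next
    case False
    have pQ: "norm (Qp u) > 0"
    proof (rule ccontr)
      assume "\<not> norm (Qp u) > 0"
      then have "norm (Qp u) = 0" by simp
      with False show False by simp
    qed
    have rh: "rho r u = 1 / norm (Qp u)" using False by (simp add: rho_def)
    have "t *\<^sub>R u \<in> Kc r \<longleftrightarrow> t \<le> 1 / norm (Qp u)" if t: "t > 0" for t
    proof
      assume "t *\<^sub>R u \<in> Kc r"
      then have "t * norm (Qp u) \<le> 1" using t by (simp add: Kc_def)
      then show "t \<le> 1 / norm (Qp u)" using pQ by (simp add: field_simps)
    next
      assume tl: "t \<le> 1 / norm (Qp u)"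
      then have 2: "t * norm (Qp u) \<le> 1" using pQ by (simp add: field_simps)
      have "t * norm (Pp u) \<le> t * (r * norm (Qp u))" using False t by (intro mult_left_mono) auto
      then have "t * norm (Pp u) \<le> r * (t * norm (Qp u))" by (simp add: algebra_simps)
      also have "\<dots> \<le> r" using 2 r by (simp add: mult_left_le)
      finally have 1: "t * norm (Pp u) \<le> r" .
      show "t *\<^sub>R u \<in> Kc r" using 1 2 t by (simp add: Kc_def)
    qed
    then show ?thesis using rh pQ by auto
  qed
  then show "{t. t > 0 \<and> t *\<^sub>R u \<in> Kc r} = {0<..rho r u}" and "rho r u > 0" by auto
qed

lemma radial_Kc:
  assumes r: "0 < r" "r \<le> 1" and u: "norm u = 1"
  shows "radial_fun (Kc r) u = rho r u"
  unfolding radial_fun_def rho_set(1)[OF r u] using rho_set(2)[OF r u] by simp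

lemma support_P:
  assumes r: "0 < r" and v: "v \<in> span B1" "norm v = 1"
  shows "support_fun (Kc r) v = r"
  unfolding support_fun_def
proof (rule cSup_eq_maximum)
  have "Pp (r *\<^sub>R v) = r *\<^sub>R v" "Qp (r *\<^sub>R v) = 0" using Pp_span[OF v(1)] Qp_span[OF v(1)] by auto
  then have "r *\<^sub>R v \<in> Kc r" using r v by (simp add: Kc_def)
  moreover have "v \<bullet> (r *\<^sub>R v) = r" using v by (simp add: dot_square_norm)
  ultimately show "r \<in> (\<lambda>y. v \<bullet> y) ` Kc r" by (metis image_eqI)
next
  fix z assume "z \<in> (\<lambda>y. v \<bullet> y) ` Kc r"
  then obtain y where y: "y \<in> Kc r" "z = v \<bullet> y" by blast
  have "v \<bullet> y = v \<bullet> Pp y + v \<bullet> Qp y" using PQ_sum[of y] by (metis inner_add_right)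
  also have "v \<bullet> Qp y = 0" using PQ_orth[of v y] Pp_span[OF v(1)] by simp
  also have "v \<bullet> Pp y \<le> norm v * norm (Pp y)" by (rule norm_cauchy_schwarz)
  finally show "z \<le> r" using y v by (simp add: Kc_def)
qed

lemma support_Q:
  assumes r: "0 < r" and v: "Qp v = v" "norm v = 1"
  shows "support_fun (Kc r) v = 1"
  unfolding support_fun_def
proof (rule cSup_eq_maximum)
  have "Pp v = 0" using v(1) Pp_Qp[of v] by simp
  then have "v \<in> Kc r" using v r by (auto simp: Kc_def)
  moreover have "v \<bullet> v = 1" using v by (simp add: dot_square_norm)
  ultimately show "1 \<in> (\<lambda>y. v \<bullet> y) ` Kc r" by (metis image_eqI)
next
  fix z assume "z \<in> (\<lambda>y. v \<bullet> y) ` Kc r"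
  then obtain y where y: "y \<in> Kc r" "z = v \<bullet> y" by blast
  have "v \<bullet> y = v \<bullet> Pp y + v \<bullet> Qp y" using PQ_sum[of y] by (metis inner_add_right)
  also have "v \<bullet> Pp y = 0" using PQ_orth[of y v] v(1) by (simp add: inner_commute)
  also have "v \<bullet> Qp y \<le> norm v * norm (Qp y)" by (rule norm_cauchy_schwarz)
  finally show "z \<le> 1" using y v by (simp add: Kc_def)
qed

end


context splitb
begin

lemma dot_P: "u \<bullet> Pp u = (norm (Pp u))\<^sup>2"
proof -
  have "u \<bullet> Pp u = (Pp u + Qp u) \<bullet> Pp u" by (simp add: PQ_sum)
  also have "\<dots> = Pp u \<bullet> Pp u + Qp u \<bullet> Pp u" by (simp add: inner_add_left)
  also have "Qp u \<bullet> Pp u = 0" using PQ_orth[of u u] by (simp add: inner_commute)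
  finally show ?thesis by (simp add: dot_square_norm)
qed

lemma dot_Q: "u \<bullet> Qp u = (norm (Qp u))\<^sup>2"
proof -
  have "u \<bullet> Qp u = (Pp u + Qp u) \<bullet> Qp u" by (simp add: PQ_sum)
  also have "\<dots> = Pp u \<bullet> Qp u + Qp u \<bullet> Qp u" by (simp add: inner_add_left)
  also have "Pp u \<bullet> Qp u = 0" using PQ_orth[of u u] by simp
  finally show ?thesis by (simp add: dot_square_norm)
qed

lemma alpha_case1:
  assumes r: "0 < r" "r \<le> 1" and u: "norm u = 1" and c: "r * norm (Qp u) \<le> norm (Pp u)"
  shows "\<exists>v\<in>sphere 0 1 \<inter> span B1. radial_fun (Kc r) u *\<^sub>R u \<in> supp_hyperplane (Kc r) v"
proof -
  have pP: "norm (Pp u) > 0"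
  proof (rule ccontr)
    assume "\<not> norm (Pp u) > 0"
    then have 0: "norm (Pp u) = 0" by simp
    then have "norm (Qp u) > 0" using u_ne[OF u] by simp
    then have "r * norm (Qp u) > 0" using r by simp
    with c 0 show False by simp
  qed
  define v where "v = Pp u /\<^sub>R norm (Pp u)"
  have vs: "v \<in> span B1" unfolding v_def by (intro span_mul Pp_in_span)
  have vn: "norm v = 1" using pP by (simp add: v_def)
  have rh: "radial_fun (Kc r) u = r / norm (Pp u)" using radial_Kc[OF r u] c by (simp add: rho_def)
  have "(radial_fun (Kc r) u *\<^sub>R u) \<bullet> v = r / norm (Pp u) * (u \<bullet> Pp u) / norm (Pp u)"
    by (simp add: rh v_def field_simps)
  also have "\<dots> = r" using pP by (simp add: dot_P power2_eq_square)
  finally have "(radial_fun (Kc r) u *\<^sub>R u) \<bullet> v = support_fun (Kc r) v"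
    using support_P[OF r(1) vs vn] by simp
  then show ?thesis using vs vn by (intro bexI[of _ v]) (auto simp: supp_hyperplane_def)
qed

lemma alpha_case2:
  assumes r: "0 < r" "r \<le> 1" and u: "norm u = 1" and c: "\<not> r * norm (Qp u) \<le> norm (Pp u)"
  shows "\<exists>v\<in>sphere 0 1. radial_fun (Kc r) u *\<^sub>R u \<in> supp_hyperplane (Kc r) v"
proof -
  have pQ: "norm (Qp u) > 0"
  proof (rule ccontr)
    assume "\<not> norm (Qp u) > 0"
    then have "norm (Qp u) = 0" by simp
    with c show False by simp
  qed
  define v where "v = Qp u /\<^sub>R norm (Qp u)"
  have vQ: "Qp v = v" by (simp add: v_def)
  have vn: "norm v = 1" using pQ by (simp add: v_def)
  have rh: "radial_fun (Kc r) u = 1 / norm (Qp u)" using radial_Kc[OF r u] c by (simp add: rho_def)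
  have "(radial_fun (Kc r) u *\<^sub>R u) \<bullet> v = 1 / norm (Qp u) * (u \<bullet> Qp u) / norm (Qp u)"
    by (simp add: rh v_def field_simps)
  also have "\<dots> = 1" using pQ by (simp add: dot_Q power2_eq_square)
  finally have "(radial_fun (Kc r) u *\<^sub>R u) \<bullet> v = support_fun (Kc r) v"
    using support_Q[OF r(1) vQ vn] by simp
  then show ?thesis using vn by (intro bexI[of _ v]) (auto simp: supp_hyperplane_def)
qed

lemma alpha_S:
  assumes r: "0 < r" "r \<le> 1"
  shows "rev_radial_gauss (Kc r) (sphere 0 1) = sphere 0 1"
proof -
  have "u \<in> rev_radial_gauss (Kc r) (sphere 0 1)" if u: "u \<in> sphere 0 1" for u
  proof (cases "r * norm (Qp u) \<le> norm (Pp u)")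
    case True
    then show ?thesis using alpha_case1[OF r _ True] u by (auto simp: rev_radial_gauss_def)
  next
    case False
    then show ?thesis using alpha_case2[OF r _ False] u by (auto simp: rev_radial_gauss_def)
  qed
  then show ?thesis by (auto simp: rev_radial_gauss_def)
qed

lemma alpha_L:
  assumes r: "0 < r" "r \<le> 1"
  shows "rev_radial_gauss (Kc r) (sphere 0 1 \<inter> span B1) = {u \<in> sphere 0 1. r * norm (Qp u) \<le> norm (Pp u)}"
proof (intro set_eqI iffI)
  fix u assume "u \<in> {u \<in> sphere 0 1. r * norm (Qp u) \<le> norm (Pp u)}"
  then show "u \<in> rev_radial_gauss (Kc r) (sphere 0 1 \<inter> span B1)"
    using alpha_case1[OF r] by (auto simp: rev_radial_gauss_def)
next
  fix u assume "u \<in> rev_radial_gauss (Kc r) (sphere 0 1 \<inter> span B1)"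
  then obtain v where u: "norm u = 1" and v: "v \<in> span B1" "norm v = 1"
    and h: "(radial_fun (Kc r) u *\<^sub>R u) \<bullet> v = support_fun (Kc r) v"
    by (auto simp: rev_radial_gauss_def supp_hyperplane_def)
  show "u \<in> {u \<in> sphere 0 1. r * norm (Qp u) \<le> norm (Pp u)}"
  proof (rule ccontr)
    assume "\<not> ?thesis"
    then have c: "\<not> r * norm (Qp u) \<le> norm (Pp u)" using u by auto
    have pQ: "norm (Qp u) > 0"
    proof (rule ccontr)
      assume "\<not> norm (Qp u) > 0"
      then have "norm (Qp u) = 0" by simp
      with c show False by simp
    qed
    have rh: "radial_fun (Kc r) u = 1 / norm (Qp u)" using radial_Kc[OF r u] c by (simp add: rho_def)
    have "u \<bullet> v = Pp u \<bullet> v + Qp u \<bullet> v" using PQ_sum[of u] by (metis inner_add_left)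
    also have "Qp u \<bullet> v = 0" using PQ_orth[of v u] Pp_span[OF v(1)] by (simp add: inner_commute)
    also have "Pp u \<bullet> v \<le> norm (Pp u) * norm v" by (rule norm_cauchy_schwarz)
    finally have "u \<bullet> v \<le> norm (Pp u)" using v by simp
    then have "(radial_fun (Kc r) u *\<^sub>R u) \<bullet> v \<le> norm (Pp u) / norm (Qp u)"
      using pQ by (simp add: rh divide_right_mono)
    also have "\<dots> < r" using c pQ by (simp add: field_simps)
    finally show False using h support_P[OF r(1) v] by simp
  qed
qed

end


context splitb
begin

definition cnd :: "bool \<Rightarrow> real \<Rightarrow> 'a \<Rightarrow> bool" where
  "cnd b r x \<longleftrightarrow> (b \<longrightarrow> r * norm (Qp x) \<le> norm (Pp x))"

lemma cnd_scale: "t > 0 \<Longrightarrow> cnd b r (t *\<^sub>R x) = cnd b r x"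
  by (auto simp: cnd_def mult.left_commute[of r t])

lemma cnd_borel[measurable]: "{x. cnd b r x} \<in> sets borel"
  unfolding cnd_def by measurable

lemma rho_borel[measurable]: "rho r \<in> borel_measurable borel"
  unfolding rho_def by measurable

lemma Kc_borel[measurable]: "Kc r \<in> sets borel"
  unfolding Kc_def by measurable

definition fb :: "real \<Rightarrow> bool \<Rightarrow> real \<Rightarrow> 'a \<Rightarrow> ennreal" where
  "fb q b r x = indicator (Kc r) x * indicator {x. cnd b r x} x * ennreal (norm x powr (q - real DIM('a)))"

lemma fb_borel[measurable]: "fb q b r \<in> borel_measurable borel"
  unfolding fb_def by measurable

lemma rho_le: assumes r: "0 < r" "r \<le> 1" and u: "norm u = 1" shows "rho r u \<le> 2"
proof -
  have "rho r u \<in> {0<..rho r u}" using rho_set(2)[OF r u] by simp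
  then have "rho r u *\<^sub>R u \<in> Kc r" using rho_set(1)[OF r u] by blast
  then have "rho r u *\<^sub>R u \<in> cball 0 (r + 1)" using Kc_bounded by blast
  then have "norm (rho r u *\<^sub>R u) \<le> r + 1" by (simp only: mem_cball_0)
  then show ?thesis using u rho_set(2)[OF r u] r by simp
qed

lemma inner_polar:
  assumes r: "0 < r" "r \<le> 1" and u: "norm u = 1" and q: "q > 0"
  shows "(\<integral>\<^sup>+t. fb q b r (t *\<^sub>R u) \<partial>mur DIM('a)) = indicator {x. cnd b r x} u * ennreal (rho r u powr q / q)"
proof -
  let ?n = "real DIM('a)"
  have pt: "ennreal (t powr (?n - 1)) * indicator {0..} t * fb q b r (t *\<^sub>R u)
      = indicator {x. cnd b r x} u * (ennreal (t powr (q - 1)) * indicator {0..rho r u} t)" for t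
  proof (cases "t > 0")
    case True
    have "t \<in> {t. t > 0 \<and> t *\<^sub>R u \<in> Kc r} \<longleftrightarrow> t \<in> {0<..rho r u}" using rho_set(1)[OF r u] by simp
    then have K: "t *\<^sub>R u \<in> Kc r \<longleftrightarrow> t \<le> rho r u" using True by simp
    have c: "cnd b r (t *\<^sub>R u) = cnd b r u" by (rule cnd_scale[OF True])
    have nt: "norm (t *\<^sub>R u) = t" using True u by simp
    have pw: "t powr (?n - 1) * t powr (q - ?n) = t powr (q - 1)"
      using True by (simp add: powr_add[symmetric])
    have i1: "indicator (Kc r) (t *\<^sub>R u) = (indicator {0..rho r u} t :: ennreal)"
      using K True by (simp add: indicator_def)
    have i2: "indicator {x. cnd b r x} (t *\<^sub>R u) = (indicator {x. cnd b r x} u :: ennreal)"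
      using c by (simp add: indicator_def)
    have i0: "indicator {0..} t = (1::ennreal)" using True by (simp add: indicator_def)
    have e: "ennreal (t powr (?n - 1)) * ennreal (t powr (q - ?n)) = ennreal (t powr (q - 1))"
      using pw by (simp add: ennreal_mult[symmetric])
    have "ennreal (t powr (?n - 1)) * indicator {0..} t * fb q b r (t *\<^sub>R u)
        = indicator {x. cnd b r x} u * ((ennreal (t powr (?n - 1)) * ennreal (t powr (q - ?n))) * indicator {0..rho r u} t)"
      unfolding fb_def i0 i1 i2 nt by (simp only: ac_simps mult_1_right mult_1_left Collect_mem_eq)
    then show ?thesis unfolding e by (simp only: ac_simps)
  next
    case False
    show ?thesis
    proof (cases "t = 0")
      case True
      then show ?thesis by simp
    next
      case f2: False
      with False have "t < 0" by simp
      then show ?thesis by (simp add: indicator_def)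
    qed
  qed
  have "(\<integral>\<^sup>+t. fb q b r (t *\<^sub>R u) \<partial>mur DIM('a))
      = (\<integral>\<^sup>+t. ennreal (t powr (?n - 1)) * indicator {0..} t * fb q b r (t *\<^sub>R u) \<partial>lborel)"
    unfolding mur_def by (subst nn_integral_density) auto
  also have "\<dots> = (\<integral>\<^sup>+t. indicator {x. cnd b r x} u * (ennreal (t powr (q - 1)) * indicator {0..rho r u} t) \<partial>lborel)"
    by (simp only: pt)
  also have "\<dots> = indicator {x. cnd b r x} u * (\<integral>\<^sup>+t. ennreal (t powr (q - 1)) * indicator {0..rho r u} t \<partial>lborel)"
    by (rule nn_integral_cmult) measurable
  also have "(\<integral>\<^sup>+t. ennreal (t powr (q - 1)) * indicator {0..rho r u} t \<partial>lborel) = ennreal (rho r u powr (q - 1 + 1) / (q - 1 + 1))"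
  proof (rule nn_integral_has_integral_lebesgue')
    show "((\<lambda>t. t powr (q - 1)) has_integral rho r u powr (q - 1 + 1) / (q - 1 + 1)) {0..rho r u}"
      using q rho_set(2)[OF r u] by (intro has_integral_powr_from_0) auto
  qed auto
  finally show ?thesis by simp
qed

lemma polar_fb:
  assumes r: "0 < r" "r \<le> 1" and q: "q > 0"
  shows "(\<integral>\<^sup>+u. indicator {x. cnd b r x} u * ennreal (rho r u powr q) \<partial>sphere_measure)
       = ennreal q * (\<integral>\<^sup>+x. fb q b r x \<partial>lborel)"
proof -
  have mb: "(\<lambda>u. indicator {x. cnd b r x} u * ennreal (rho r u powr q / q)) \<in> borel_measurable sphere_measure"
    by (rule measurable_compose[OF measurable_sphere_id]) measurable
  have "(\<integral>\<^sup>+x. fb q b r x \<partial>lborel) = (\<integral>\<^sup>+u. (\<integral>\<^sup>+t. fb q b r (t *\<^sub>R u) \<partial>mur DIM('a)) \<partial>sphere_measure)"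
    by (rule polar_nn_integral) measurable
  also have "\<dots> = (\<integral>\<^sup>+u. indicator {x. cnd b r x} u * ennreal (rho r u powr q / q) \<partial>sphere_measure)"
    by (rule nn_integral_cong) (use inner_polar[OF r _ q] in \<open>auto simp: space_sphere_measure\<close>)
  finally have e: "ennreal q * (\<integral>\<^sup>+x. fb q b r x \<partial>lborel) = ennreal q * (\<integral>\<^sup>+u. indicator {x. cnd b r x} u * ennreal (rho r u powr q / q) \<partial>sphere_measure)"
    by simp
  also have "\<dots> = (\<integral>\<^sup>+u. ennreal q * (indicator {x. cnd b r x} u * ennreal (rho r u powr q / q)) \<partial>sphere_measure)"
    by (rule nn_integral_cmult[symmetric, OF mb])
  also have "\<dots> = (\<integral>\<^sup>+u. indicator {x. cnd b r x} u * ennreal (rho r u powr q) \<partial>sphere_measure)"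
  proof (rule nn_integral_cong)
    fix u
    have "ennreal q * ennreal (rho r u powr q / q) = ennreal (rho r u powr q)"
      using q by (simp add: ennreal_mult'[symmetric])
    then show "ennreal q * (indicator {x. cnd b r x} u * ennreal (rho r u powr q / q)) = indicator {x. cnd b r x} u * ennreal (rho r u powr q)"
      by (metis mult.left_commute)
  qed
  finally show ?thesis ..
qed

end


context splitb
begin

lemma dcm_Kc:
  assumes r: "0 < r" "r \<le> 1" and q: "q > 0"
    and eta: "rev_radial_gauss (Kc r) eta = {u \<in> sphere 0 1. cnd b r u}"
  shows "dual_curv_measure q (Kc r) eta = q / real DIM('a) * enn2real (\<integral>\<^sup>+x. fb q b r x \<partial>lborel)"
    and "(\<integral>\<^sup>+x. fb q b r x \<partial>lborel) < \<infinity>"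
proof -
  interpret finite_measure "sphere_measure :: 'a measure" by (rule finite_sphere_measure)
  define g where "g u = indicator {x. cnd b r x} u * rho r u powr q" for u :: 'a
  have gm: "g \<in> borel_measurable sphere_measure"
    unfolding g_def by (rule measurable_compose[OF measurable_sphere_id]) measurable
  have gb: "norm (g u) \<le> 2 powr q" if "u \<in> space sphere_measure" for u
  proof -
    have u: "norm u = 1" using that by (simp add: space_sphere_measure)
    have "rho r u powr q \<le> 2 powr q"
      using rho_le[OF r u] rho_set(2)[OF r u] q by (intro powr_mono2) auto
    then show ?thesis by (auto simp: g_def indicator_def)
  qed
  have gi: "integrable sphere_measure g"
    by (rule integrable_const_bound[where B="2 powr q"]) (use gb gm in \<open>auto intro: AE_I2\<close>)
  have gnn: "0 \<le> g u" for u by (simp add: g_def)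
  have "dual_curv_measure q (Kc r) eta = 1 / real DIM('a) * integral\<^sup>L sphere_measure g"
    unfolding dual_curv_measure_def set_lebesgue_integral_def eta
  proof (intro arg_cong[where f="\<lambda>z. 1 / real DIM('a) * z"] Bochner_Integration.integral_cong refl)
    fix u :: 'a assume "u \<in> space sphere_measure"
    then have u: "norm u = 1" by (simp add: space_sphere_measure)
    show "indicator {u \<in> sphere 0 1. cnd b r u} u *\<^sub>R radial_fun (Kc r) u powr q = g u"
      using u radial_Kc[OF r u] by (simp add: g_def indicator_def)
  qed
  moreover have E: "ennreal (integral\<^sup>L sphere_measure g) = ennreal q * (\<integral>\<^sup>+x. fb q b r x \<partial>lborel)"
  proof -
    have "ennreal (integral\<^sup>L sphere_measure g) = (\<integral>\<^sup>+u. ennreal (g u) \<partial>sphere_measure)"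
      by (rule nn_integral_eq_integral[symmetric, OF gi]) (simp add: gnn)
    also have "\<dots> = (\<integral>\<^sup>+u. indicator {x. cnd b r x} u * ennreal (rho r u powr q) \<partial>sphere_measure)"
      by (rule nn_integral_cong) (auto simp: g_def split: split_indicator)
    also have "\<dots> = ennreal q * (\<integral>\<^sup>+x. fb q b r x \<partial>lborel)" by (rule polar_fb[OF r q])
    finally show ?thesis .
  qed
  moreover have inn: "0 \<le> integral\<^sup>L sphere_measure g" by (rule Bochner_Integration.integral_nonneg) (simp add: gnn)
  moreover have fin: "(\<integral>\<^sup>+x. fb q b r x \<partial>lborel) < \<infinity>"
  proof (rule ccontr)
    assume "\<not> ?thesis"
    then have "(\<integral>\<^sup>+x. fb q b r x \<partial>lborel) = \<infinity>" by (metis infinity_ennreal_def less_top)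
    then have "ennreal q * (\<integral>\<^sup>+x. fb q b r x \<partial>lborel) = \<infinity>" using q by (simp add: ennreal_mult_eq_top_iff)
    with E show False by simp
  qed
  ultimately show "dual_curv_measure q (Kc r) eta = q / real DIM('a) * enn2real (\<integral>\<^sup>+x. fb q b r x \<partial>lborel)"
    "(\<integral>\<^sup>+x. fb q b r x \<partial>lborel) < \<infinity>"
  proof -
    have "integral\<^sup>L sphere_measure g = enn2real (ennreal q * (\<integral>\<^sup>+x. fb q b r x \<partial>lborel))"
      using E inn by (metis enn2real_ennreal)
    also have "\<dots> = q * enn2real (\<integral>\<^sup>+x. fb q b r x \<partial>lborel)"
      using q by (simp add: enn2real_mult)
    finally have "integral\<^sup>L sphere_measure g = q * enn2real (\<integral>\<^sup>+x. fb q b r x \<partial>lborel)" .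
    then show "dual_curv_measure q (Kc r) eta = q / real DIM('a) * enn2real (\<integral>\<^sup>+x. fb q b r x \<partial>lborel)"
      using \<open>dual_curv_measure q (Kc r) eta = 1 / real DIM('a) * integral\<^sup>L sphere_measure g\<close> by simp
    show "(\<integral>\<^sup>+x. fb q b r x \<partial>lborel) < \<infinity>" by (rule fin)
  qed
qed

end


context splitb
begin

definition psi :: "real \<Rightarrow> bool \<Rightarrow> real \<Rightarrow> real \<Rightarrow> real \<Rightarrow> real" where
  "psi q b r \<tau> s = (if 0 \<le> \<tau> \<and> \<tau> \<le> 1 \<and> 0 \<le> s \<and> s \<le> 1 \<and> (b \<longrightarrow> s \<le> \<tau>)
     then \<tau> powr (real kk - 1) * s powr (real mm - 1) * (r\<^sup>2 * \<tau>\<^sup>2 + s\<^sup>2) powr ((q - real DIM('a)) / 2) else 0)"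

definition chi :: "real \<Rightarrow> bool \<Rightarrow> real \<Rightarrow> real \<Rightarrow> real \<Rightarrow> real" where
  "chi q b r t s = (if 0 \<le> t \<and> t \<le> 1 \<and> 0 \<le> s \<and> s \<le> 1 \<and> t \<le> r \<and> (b \<longrightarrow> r * s \<le> t)
     then t powr (real kk - 1) * s powr (real mm - 1) * (t\<^sup>2 + s\<^sup>2) powr ((q - real DIM('a)) / 2) else 0)"

definition hh :: "real \<Rightarrow> bool \<Rightarrow> real \<Rightarrow> real \<times> real \<Rightarrow> ennreal" where
  "hh q b r p = ennreal (if fst p \<le> r \<and> snd p \<le> 1 \<and> (b \<longrightarrow> r * snd p \<le> fst p)
     then ((fst p)\<^sup>2 + (snd p)\<^sup>2) powr ((q - real DIM('a)) / 2) else 0)"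

lemma psi_nonneg: "psi q b r \<tau> s \<ge> 0" by (simp add: psi_def)
lemma chi_nonneg: "chi q b r t s \<ge> 0" by (simp add: chi_def)

lemma psi_borel[measurable]: "(\<lambda>(\<tau>, s). psi q b r \<tau> s) \<in> borel_measurable (borel \<Otimes>\<^sub>M borel)"
  unfolding psi_def by measurable

lemma chi_borel[measurable]: "(\<lambda>(t, s). chi q b r t s) \<in> borel_measurable (borel \<Otimes>\<^sub>M borel)"
  unfolding chi_def by measurable

lemma hh_borel[measurable]: "hh q b r \<in> borel_measurable (borel \<Otimes>\<^sub>M borel)"
  unfolding hh_def by measurable

lemma norm_powr_PQ: "norm x powr e = ((norm (Pp x))\<^sup>2 + (norm (Qp x))\<^sup>2) powr (e / 2)"
proof -
  have a: "(norm x powr 2) powr (e / 2) = norm x powr (2 * (e / 2))" by (rule powr_powr)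
  have b: "norm x powr 2 = (norm x)\<^sup>2" by (simp add: powr_numeral)
  have "norm x powr e = ((norm x)\<^sup>2) powr (e / 2)" using a b by simp
  then show ?thesis by (simp add: norm_PQ[of x])
qed

lemma fb_eq:
  assumes r: "0 < r" "r \<le> 1"
  shows "fb q b r x = indicator D1 x * hh q b r (norm (Pp x), norm (Qp x))"
proof (cases "x \<in> Kc r")
  case True
  then have "x \<in> D1" using r by (auto simp: Kc_def D1_def)
  then show ?thesis using True
    by (auto simp: fb_def hh_def Kc_def cnd_def norm_powr_PQ[of x] indicator_def)
next
  case False
  then show ?thesis
    by (auto simp: fb_def hh_def Kc_def cnd_def indicator_def)
qed

lemma step_push:
  assumes r: "0 < r" "r \<le> 1"
  shows "(\<integral>\<^sup>+x. fb q b r x \<partial>lborel) = (\<integral>\<^sup>+t. (\<integral>\<^sup>+s. ennreal (Cc * chi q b r t s) \<partial>lborel) \<partial>lborel)"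
proof -
  have "(\<integral>\<^sup>+x. fb q b r x \<partial>lborel) = (\<integral>\<^sup>+x. indicator D1 x * hh q b r (norm (Pp x), norm (Qp x)) \<partial>lborel)"
    by (rule nn_integral_cong) (simp add: fb_eq[OF r])
  also have "\<dots> = (\<integral>\<^sup>+t. ennreal (t powr (real kk - 1)) * indicator {0..1} t *
            (\<integral>\<^sup>+s. ennreal (Cc * s powr (real mm - 1)) * indicator {0..1} s * hh q b r (t, s) \<partial>lborel) \<partial>lborel)"
    by (rule push_integral) measurable
  also have "\<dots> = (\<integral>\<^sup>+t. (\<integral>\<^sup>+s. ennreal (Cc * chi q b r t s) \<partial>lborel) \<partial>lborel)"
  proof (rule nn_integral_cong)
    fix t :: real
    have "ennreal (t powr (real kk - 1)) * indicator {0..1} t *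
            (\<integral>\<^sup>+s. ennreal (Cc * s powr (real mm - 1)) * indicator {0..1} s * hh q b r (t, s) \<partial>lborel)
        = (\<integral>\<^sup>+s. ennreal (t powr (real kk - 1)) * indicator {0..1} t * (ennreal (Cc * s powr (real mm - 1)) * indicator {0..1} s * hh q b r (t, s)) \<partial>lborel)"
      by (rule nn_integral_cmult[symmetric]) measurable
    also have "\<dots> = (\<integral>\<^sup>+s. ennreal (Cc * chi q b r t s) \<partial>lborel)"
    proof (rule nn_integral_cong)
      fix s :: real
      show "ennreal (t powr (real kk - 1)) * indicator {0..1} t * (ennreal (Cc * s powr (real mm - 1)) * indicator {0..1} s * hh q b r (t, s))
          = ennreal (Cc * chi q b r t s)"
        using Cc_pos
        by (auto simp: chi_def hh_def indicator_def ennreal_mult'[symmetric] mult.assoc mult.left_commute)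
    qed
    finally show "ennreal (t powr (real kk - 1)) * indicator {0..1} t *
            (\<integral>\<^sup>+s. ennreal (Cc * s powr (real mm - 1)) * indicator {0..1} s * hh q b r (t, s) \<partial>lborel)
        = (\<integral>\<^sup>+s. ennreal (Cc * chi q b r t s) \<partial>lborel)" .
  qed
  finally show ?thesis .
qed

end


context splitb
begin

lemma meas_inner:
  fixes f :: "real \<Rightarrow> real \<Rightarrow> real"
  assumes "(\<lambda>(x, y). f x y) \<in> borel_measurable (borel \<Otimes>\<^sub>M borel)"
  shows "(\<lambda>x. \<integral>\<^sup>+y. ennreal (f x y) \<partial>lborel) \<in> borel_measurable borel"
proof -
  have "(\<lambda>(x, y). ennreal (f x y)) \<in> borel_measurable (lborel \<Otimes>\<^sub>M lborel)"
    using assms by (simp cong: measurable_cong_sets)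
  then have "(\<lambda>x. \<integral>\<^sup>+y. ennreal (f x y) \<partial>lborel) \<in> borel_measurable lborel"
    by (rule lborel.borel_measurable_nn_integral)
  then show ?thesis by (simp cong: measurable_cong_sets)
qed

definition Phi :: "real \<Rightarrow> bool \<Rightarrow> real \<Rightarrow> ennreal" where
  "Phi q b r = (\<integral>\<^sup>+\<tau>. (\<integral>\<^sup>+s. ennreal (psi q b r \<tau> s) \<partial>lborel) \<partial>lborel)"

lemma chi_scale:
  assumes r: "0 < r" "r \<le> 1"
  shows "chi q b r (r * \<tau>) s = r powr (real kk - 1) * psi q b r \<tau> s"
proof -
  have c: "(0 \<le> r * \<tau> \<and> r * \<tau> \<le> 1 \<and> 0 \<le> s \<and> s \<le> 1 \<and> r * \<tau> \<le> r \<and> (b \<longrightarrow> r * s \<le> r * \<tau>))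
      \<longleftrightarrow> (0 \<le> \<tau> \<and> \<tau> \<le> 1 \<and> 0 \<le> s \<and> s \<le> 1 \<and> (b \<longrightarrow> s \<le> \<tau>))"
  proof -
    have "0 \<le> r * \<tau> \<longleftrightarrow> 0 \<le> \<tau>" using r by (simp add: zero_le_mult_iff)
    moreover have "r * \<tau> \<le> r \<longleftrightarrow> \<tau> \<le> 1" using r by simp
    moreover have "r * \<tau> \<le> 1" if t1: "\<tau> \<le> 1"
    proof (cases "\<tau> \<ge> 0")
      case True
      then have "r * \<tau> \<le> 1 * \<tau>" using r by (intro mult_right_mono) auto
      then show ?thesis using t1 by simp
    next
      case False
      then have "r * \<tau> \<le> 0" using r by (simp add: mult_nonneg_nonpos)
      then show ?thesis by simp
    qed
    moreover have "r * s \<le> r * \<tau> \<longleftrightarrow> s \<le> \<tau>" using r by simp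
    ultimately show ?thesis by blast
  qed
  show ?thesis
  proof (cases "0 \<le> \<tau> \<and> \<tau> \<le> 1 \<and> 0 \<le> s \<and> s \<le> 1 \<and> (b \<longrightarrow> s \<le> \<tau>)")
    case True
    then have c2: "0 \<le> r * \<tau> \<and> r * \<tau> \<le> 1 \<and> 0 \<le> s \<and> s \<le> 1 \<and> r * \<tau> \<le> r \<and> (b \<longrightarrow> r * s \<le> r * \<tau>)" using c by blast
    have pm: "(r * \<tau>) powr (real kk - 1) = r powr (real kk - 1) * \<tau> powr (real kk - 1)"
      using r True by (simp add: powr_mult)
    have sq: "(r * \<tau>)\<^sup>2 = r\<^sup>2 * \<tau>\<^sup>2" by (simp add: power_mult_distrib)
    show ?thesis by (simp only: chi_def psi_def if_P[OF c2] if_P[OF True] pm sq mult.assoc)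
  next
    case False
    then have "\<not> (0 \<le> r * \<tau> \<and> r * \<tau> \<le> 1 \<and> 0 \<le> s \<and> s \<le> 1 \<and> r * \<tau> \<le> r \<and> (b \<longrightarrow> r * s \<le> r * \<tau>))" using c by blast
    then show ?thesis using False by (simp only: chi_def psi_def if_False if_not_P mult_zero_right)
  qed
qed

lemma step_subst:
  assumes r: "0 < r" "r \<le> 1"
  shows "(\<integral>\<^sup>+t. (\<integral>\<^sup>+s. ennreal (Cc * chi q b r t s) \<partial>lborel) \<partial>lborel) = ennreal (Cc * r powr real kk) * Phi q b r"
proof -
  have "(\<integral>\<^sup>+t. (\<integral>\<^sup>+s. ennreal (Cc * chi q b r t s) \<partial>lborel) \<partial>lborel)
      = ennreal \<bar>r\<bar> * (\<integral>\<^sup>+\<tau>. (\<integral>\<^sup>+s. ennreal (Cc * chi q b r (0 + r * \<tau>) s) \<partial>lborel) \<partial>lborel)"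
    using r by (intro nn_integral_real_affine) measurable
  also have "\<dots> = ennreal r * (\<integral>\<^sup>+\<tau>. ennreal (Cc * r powr (real kk - 1)) * (\<integral>\<^sup>+s. ennreal (psi q b r \<tau> s) \<partial>lborel) \<partial>lborel)"
  proof -
    have "(\<integral>\<^sup>+s. ennreal (Cc * chi q b r (0 + r * \<tau>) s) \<partial>lborel)
        = ennreal (Cc * r powr (real kk - 1)) * (\<integral>\<^sup>+s. ennreal (psi q b r \<tau> s) \<partial>lborel)" for \<tau>
    proof -
      have "(\<integral>\<^sup>+s. ennreal (Cc * chi q b r (0 + r * \<tau>) s) \<partial>lborel)
          = (\<integral>\<^sup>+s. ennreal (Cc * r powr (real kk - 1)) * ennreal (psi q b r \<tau> s) \<partial>lborel)"
        using Cc_pos by (intro nn_integral_cong) (simp add: chi_scale[OF r] ennreal_mult psi_nonneg mult.assoc)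
      also have "\<dots> = ennreal (Cc * r powr (real kk - 1)) * (\<integral>\<^sup>+s. ennreal (psi q b r \<tau> s) \<partial>lborel)"
        by (rule nn_integral_cmult) measurable
      finally show ?thesis .
    qed
    then show ?thesis using r by simp
  qed
  also have "\<dots> = ennreal r * (ennreal (Cc * r powr (real kk - 1)) * Phi q b r)"
  proof -
    have m: "(\<lambda>\<tau>. \<integral>\<^sup>+s. ennreal (psi q b r \<tau> s) \<partial>lborel) \<in> borel_measurable lborel"
      using meas_inner[OF psi_borel[of q b r]] by simp
    show ?thesis unfolding Phi_def by (subst nn_integral_cmult[OF m]) simp
  qed
  also have "\<dots> = ennreal (Cc * r powr real kk) * Phi q b r"
  proof -
    have "r * (Cc * r powr (real kk - 1)) = Cc * r powr real kk"
      using r by (simp add: powr_diff field_simps)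
    then have "ennreal r * ennreal (Cc * r powr (real kk - 1)) = ennreal (Cc * r powr real kk)"
      using r Cc_pos by (simp add: ennreal_mult[symmetric])
    then show ?thesis by (simp add: mult.assoc[symmetric])
  qed
  finally show ?thesis .
qed

lemma fb_Phi:
  assumes r: "0 < r" "r \<le> 1"
  shows "(\<integral>\<^sup>+x. fb q b r x \<partial>lborel) = ennreal (Cc * r powr real kk) * Phi q b r"
  using step_push[OF r] step_subst[OF r] by simp

end


lemma mono_conv:
  fixes F :: "nat \<Rightarrow> 'b \<Rightarrow> ennreal"
  assumes inc: "\<And>x. incseq (\<lambda>l. F l x)" and meas: "\<And>l. F l \<in> borel_measurable M"
    and lim: "\<And>x. (\<lambda>l. F l x) \<longlonglongrightarrow> G x"
  shows "(\<lambda>l. \<integral>\<^sup>+x. F l x \<partial>M) \<longlonglongrightarrow> (\<integral>\<^sup>+x. G x \<partial>M)" and "incseq (\<lambda>l. \<integral>\<^sup>+x. F l x \<partial>M)"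
proof -
  have G: "G x = (SUP l. F l x)" for x
    using LIMSEQ_unique[OF lim[of x] LIMSEQ_SUP[OF inc[of x]]] .
  have incF: "incseq F" using inc by (auto simp: incseq_def le_fun_def)
  have "(\<integral>\<^sup>+x. G x \<partial>M) = (SUP l. \<integral>\<^sup>+x. F l x \<partial>M)"
    unfolding G by (rule nn_integral_monotone_convergence_SUP[OF incF meas])
  moreover show incI: "incseq (\<lambda>l. \<integral>\<^sup>+x. F l x \<partial>M)"
    using inc by (auto simp: incseq_def intro!: nn_integral_mono)
  ultimately show "(\<lambda>l. \<integral>\<^sup>+x. F l x \<partial>M) \<longlonglongrightarrow> (\<integral>\<^sup>+x. G x \<partial>M)"
    using LIMSEQ_SUP[OF incI] by simp
qed

definition rr :: "nat \<Rightarrow> real" where "rr l = inverse (real (Suc l))"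

lemma rr_pos: "0 < rr l" by (simp add: rr_def)
lemma rr_le1: "rr l \<le> 1" by (simp add: rr_def inverse_le_1_iff)
lemma rr_dec: "rr (Suc l) \<le> rr l" by (simp add: rr_def field_simps)
lemma rr_lim: "rr \<longlonglongrightarrow> 0" unfolding rr_def by (rule LIMSEQ_inverse_real_of_nat)

context splitb
begin

definition psi0 :: "real \<Rightarrow> bool \<Rightarrow> real \<Rightarrow> real \<Rightarrow> real" where
  "psi0 q b \<tau> s = (if 0 \<le> \<tau> \<and> \<tau> \<le> 1 \<and> 0 \<le> s \<and> s \<le> 1 \<and> (b \<longrightarrow> s \<le> \<tau>)
     then \<tau> powr (real kk - 1) * s powr (q - real kk - 1) else 0)"

definition Phi0 :: "real \<Rightarrow> bool \<Rightarrow> ennreal" where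
  "Phi0 q b = (\<integral>\<^sup>+\<tau>. (\<integral>\<^sup>+s. ennreal (psi0 q b \<tau> s) \<partial>lborel) \<partial>lborel)"

lemma psi0_borel[measurable]: "(\<lambda>(\<tau>, s). psi0 q b \<tau> s) \<in> borel_measurable (borel \<Otimes>\<^sub>M borel)"
  unfolding psi0_def by measurable

lemma n_eq: "real DIM('a) = real kk + real mm"
  using B1sub finB1 card_mono[OF finite_Basis B1sub] by (simp add: kk_def mm_def)

lemma psi_mono:
  assumes q: "q < real DIM('a)" and r: "0 < r'" "r' \<le> r"
  shows "psi q b r \<tau> s \<le> psi q b r' \<tau> s"
proof (cases "0 \<le> \<tau> \<and> \<tau> \<le> 1 \<and> 0 \<le> s \<and> s \<le> 1 \<and> (b \<longrightarrow> s \<le> \<tau>) \<and> s \<noteq> 0")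
  case True
  then have s: "s > 0" by auto
  have "(r\<^sup>2 * \<tau>\<^sup>2 + s\<^sup>2) powr ((q - real DIM('a)) / 2) \<le> (r'\<^sup>2 * \<tau>\<^sup>2 + s\<^sup>2) powr ((q - real DIM('a)) / 2)"
  proof (rule powr_mono2')
    show "(q - real DIM('a)) / 2 \<le> 0" using q by simp
    show "0 < r'\<^sup>2 * \<tau>\<^sup>2 + s\<^sup>2" using s by (simp add: add_nonneg_pos)
    have "r'\<^sup>2 \<le> r\<^sup>2" using r by (intro power_mono) auto
    then show "r'\<^sup>2 * \<tau>\<^sup>2 + s\<^sup>2 \<le> r\<^sup>2 * \<tau>\<^sup>2 + s\<^sup>2" by (intro add_right_mono mult_right_mono) auto
  qed
  then show ?thesis using True by (auto simp: psi_def intro!: mult_left_mono)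
next
  case False
  then show ?thesis by (auto simp: psi_def)
qed

lemma psi_lim: "(\<lambda>l. psi q b (rr l) \<tau> s) \<longlonglongrightarrow> psi0 q b \<tau> s"
proof (cases "0 \<le> \<tau> \<and> \<tau> \<le> 1 \<and> 0 \<le> s \<and> s \<le> 1 \<and> (b \<longrightarrow> s \<le> \<tau>) \<and> s \<noteq> 0")
  case True
  then have s: "s > 0" by auto
  have "(\<lambda>l. (rr l)\<^sup>2 * \<tau>\<^sup>2 + s\<^sup>2) \<longlonglongrightarrow> 0\<^sup>2 * \<tau>\<^sup>2 + s\<^sup>2"
    by (intro tendsto_intros rr_lim)
  then have "(\<lambda>l. ((rr l)\<^sup>2 * \<tau>\<^sup>2 + s\<^sup>2) powr ((q - real DIM('a)) / 2)) \<longlonglongrightarrow> (s\<^sup>2) powr ((q - real DIM('a)) / 2)"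
    using s by (intro tendsto_powr) auto
  then have "(\<lambda>l. \<tau> powr (real kk - 1) * s powr (real mm - 1) * ((rr l)\<^sup>2 * \<tau>\<^sup>2 + s\<^sup>2) powr ((q - real DIM('a)) / 2))
      \<longlonglongrightarrow> \<tau> powr (real kk - 1) * s powr (real mm - 1) * (s\<^sup>2) powr ((q - real DIM('a)) / 2)"
    by (intro tendsto_mult tendsto_const)
  moreover have "s powr (real mm - 1) * (s\<^sup>2) powr ((q - real DIM('a)) / 2) = s powr (q - real kk - 1)"
  proof -
    have "(s\<^sup>2) powr ((q - real DIM('a)) / 2) = s powr (q - real DIM('a))"
    proof -
      have "s\<^sup>2 = s powr 2" using s by (simp add: powr_numeral)
      then have "(s\<^sup>2) powr ((q - real DIM('a)) / 2) = s powr (2 * ((q - real DIM('a)) / 2))"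
        by (simp only: powr_powr)
      moreover have "2 * ((q - real DIM('a)) / 2) = q - real DIM('a)" by simp
      ultimately show ?thesis by (simp only:)
    qed
    then have "s powr (real mm - 1) * (s\<^sup>2) powr ((q - real DIM('a)) / 2) = s powr ((real mm - 1) + (q - real DIM('a)))"
      by (simp only: powr_add)
    also have "(real mm - 1) + (q - real DIM('a)) = q - real kk - 1" using n_eq by simp
    finally show ?thesis .
  qed
  ultimately show ?thesis using True by (simp add: psi_def psi0_def mult.assoc)
next
  case False
  then show ?thesis by (auto simp: psi_def psi0_def)
qed

lemma Phi_lim:
  assumes q: "q < real DIM('a)"
  shows "(\<lambda>l. Phi q b (rr l)) \<longlonglongrightarrow> Phi0 q b"
proof -
  have inc_psi: "incseq (\<lambda>l. ennreal (psi q b (rr l) \<tau> s))" for \<tau> s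
    by (rule incseq_SucI) (rule ennreal_leI, rule psi_mono[OF q rr_pos rr_dec])
  have lim_in: "(\<lambda>l. \<integral>\<^sup>+s. ennreal (psi q b (rr l) \<tau> s) \<partial>lborel) \<longlonglongrightarrow> (\<integral>\<^sup>+s. ennreal (psi0 q b \<tau> s) \<partial>lborel)"
     and inc_in: "incseq (\<lambda>l. \<integral>\<^sup>+s. ennreal (psi q b (rr l) \<tau> s) \<partial>lborel)" for \<tau>
    by (rule mono_conv[OF inc_psi _ tendsto_ennrealI[OF psi_lim]], measurable)+
  show ?thesis unfolding Phi_def Phi0_def
  proof (rule mono_conv(1)[OF inc_in _ lim_in])
    fix l
    show "(\<lambda>\<tau>. \<integral>\<^sup>+ s. ennreal (psi q b (rr l) \<tau> s) \<partial>lborel) \<in> borel_measurable lborel"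
      using meas_inner[OF psi_borel[of q b "rr l"]] by (simp cong: measurable_cong_sets)
  qed
qed

end


lemma powint:
  assumes "a > -1" "c \<ge> 0"
  shows "(\<integral>\<^sup>+t. ennreal (t powr a) * indicator {0..c} t \<partial>lborel) = ennreal (c powr (a + 1) / (a + 1))"
  by (rule nn_integral_has_integral_lebesgue') (use assms in \<open>auto intro: has_integral_powr_from_0\<close>)

lemma inv_int_inf:
  assumes t: "\<tau> > 0"
  shows "(\<integral>\<^sup>+s. ennreal (s powr -1) * indicator {0..\<tau>} s \<partial>lborel) = \<infinity>"
proof (rule ccontr)
  let ?I = "(\<integral>\<^sup>+s. ennreal (s powr -1) * indicator {0..\<tau>} s \<partial>lborel)"
  assume "?I \<noteq> \<infinity>"
  then obtain x where x: "?I = ennreal x" "x \<ge> 0"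
    by (cases ?I rule: ennreal_cases) auto
  define e where "e = \<tau> * exp (- (x + 1))"
  have e: "0 < e" "e \<le> \<tau>" using t x(2) by (auto simp: e_def mult_le_cancel_left1)
  have "((\<lambda>s. 1 / s) has_integral (ln \<tau> - ln e)) {e..\<tau>}"
  proof (rule fundamental_theorem_of_calculus[OF e(2)])
    fix s assume "s \<in> {e..\<tau>}"
    then have "s > 0" using e by auto
    then show "(ln has_vector_derivative 1 / s) (at s within {e..\<tau>})"
      using DERIV_ln_divide[of s] by (simp add: has_real_derivative_iff_has_vector_derivative[symmetric] has_field_derivative_at_within)
  qed
  then have eq: "(\<integral>\<^sup>+s. ennreal (1 / s) * indicator {e..\<tau>} s \<partial>lborel) = ennreal (ln \<tau> - ln e)"
    using e by (intro nn_integral_has_integral_lebesgue') auto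
  have "(\<integral>\<^sup>+s. ennreal (1 / s) * indicator {e..\<tau>} s \<partial>lborel) \<le> ?I"
    using e by (intro nn_integral_mono) (auto simp: indicator_def)
  then have "ennreal (ln \<tau> - ln e) \<le> ennreal x" using eq x by simp
  moreover have "ln \<tau> - ln e = x + 1" using t by (simp add: e_def ln_mult)
  ultimately show False using x by simp
qed

lemma pow_int_inf:
  assumes p: "p \<le> -1" and t: "\<tau> > 0"
  shows "(\<integral>\<^sup>+s. ennreal (s powr p) * indicator {0..\<tau>} s \<partial>lborel) = \<infinity>"
proof -
  have "(\<integral>\<^sup>+s. ennreal (\<tau> powr (p + 1)) * (ennreal (s powr -1) * indicator {0..\<tau>} s) \<partial>lborel)
      \<le> (\<integral>\<^sup>+s. ennreal (s powr p) * indicator {0..\<tau>} s \<partial>lborel)"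
  proof (intro nn_integral_mono)
    fix s :: real
    show "ennreal (\<tau> powr (p + 1)) * (ennreal (s powr -1) * indicator {0..\<tau>} s) \<le> ennreal (s powr p) * indicator {0..\<tau>} s"
    proof (cases "0 < s \<and> s \<le> \<tau>")
      case True
      have "\<tau> powr (p + 1) \<le> s powr (p + 1)" using True p by (intro powr_mono2') auto
      then have "\<tau> powr (p + 1) * s powr -1 \<le> s powr (p + 1) * s powr -1"
        by (intro mult_right_mono) auto
      also have "\<dots> = s powr ((p + 1) + -1)" by (simp only: powr_add)
      also have "\<dots> = s powr p" by simp
      finally show ?thesis using True by (simp add: ennreal_mult[symmetric] ennreal_leI)
    next
      case False
      then show ?thesis by (auto simp: indicator_def)
    qed
  qed
  moreover have "(\<integral>\<^sup>+s. ennreal (\<tau> powr (p + 1)) * (ennreal (s powr -1) * indicator {0..\<tau>} s) \<partial>lborel) = \<infinity>"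
  proof -
    have "(\<integral>\<^sup>+s. ennreal (\<tau> powr (p + 1)) * (ennreal (s powr -1) * indicator {0..\<tau>} s) \<partial>lborel)
        = ennreal (\<tau> powr (p + 1)) * (\<integral>\<^sup>+s. ennreal (s powr -1) * indicator {0..\<tau>} s \<partial>lborel)"
      by (rule nn_integral_cmult) measurable
    also have "\<dots> = ennreal (\<tau> powr (p + 1)) * \<infinity>" by (simp only: inv_int_inf[OF t])
    also have "\<dots> = \<infinity>" using t by (simp add: ennreal_mult_top)
    finally show ?thesis .
  qed
  ultimately show ?thesis by (simp add: top_unique)
qed


context splitb
begin

lemma inner_meas: "(\<lambda>\<tau>. \<integral>\<^sup>+s. ennreal (f \<tau> s) \<partial>lborel) \<in> borel_measurable lborel"
  if "(\<lambda>(\<tau>, s). f \<tau> s) \<in> borel_measurable (borel \<Otimes>\<^sub>M borel)" for f :: "real \<Rightarrow> real \<Rightarrow> real"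
  using meas_inner[OF that] by (simp cong: measurable_cong_sets)

lemma kk_ge1: "real kk \<ge> 1" using kk_pos by simp

lemma Phi0_False:
  assumes q: "real kk < q"
  shows "Phi0 q False = ennreal (1 / (real kk * (q - real kk)))"
proof -
  have inner: "(\<integral>\<^sup>+s. ennreal (psi0 q False \<tau> s) \<partial>lborel)
      = ennreal (\<tau> powr (real kk - 1)) * indicator {0..1} \<tau> * ennreal (1 / (q - real kk))" for \<tau>
  proof -
    have "(\<integral>\<^sup>+s. ennreal (psi0 q False \<tau> s) \<partial>lborel)
        = (\<integral>\<^sup>+s. (ennreal (\<tau> powr (real kk - 1)) * indicator {0..1} \<tau>) * (ennreal (s powr (q - real kk - 1)) * indicator {0..1} s) \<partial>lborel)"
      by (rule nn_integral_cong) (auto simp: psi0_def indicator_def ennreal_mult)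
    also have "\<dots> = (ennreal (\<tau> powr (real kk - 1)) * indicator {0..1} \<tau>) * (\<integral>\<^sup>+s. ennreal (s powr (q - real kk - 1)) * indicator {0..1} s \<partial>lborel)"
      by (rule nn_integral_cmult) measurable
    also have "(\<integral>\<^sup>+s. ennreal (s powr (q - real kk - 1)) * indicator {0..1} s \<partial>lborel) = ennreal (1 / (q - real kk))"
      using q by (subst powint) auto
    finally show ?thesis .
  qed
  have "Phi0 q False = (\<integral>\<^sup>+\<tau>. ennreal (1 / (q - real kk)) * (ennreal (\<tau> powr (real kk - 1)) * indicator {0..1} \<tau>) \<partial>lborel)"
    unfolding Phi0_def inner by (simp add: mult.commute)
  also have "\<dots> = ennreal (1 / (q - real kk)) * (\<integral>\<^sup>+\<tau>. ennreal (\<tau> powr (real kk - 1)) * indicator {0..1} \<tau> \<partial>lborel)"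
    by (rule nn_integral_cmult) measurable
  also have "(\<integral>\<^sup>+\<tau>. ennreal (\<tau> powr (real kk - 1)) * indicator {0..1} \<tau> \<partial>lborel) = ennreal (1 / real kk)"
    using kk_pos by (subst powint) auto
  also have "ennreal (1 / (q - real kk)) * ennreal (1 / real kk) = ennreal (1 / (real kk * (q - real kk)))"
    using q kk_pos by (simp add: ennreal_mult[symmetric] mult.commute)
  finally show ?thesis .
qed

lemma Phi0_True:
  assumes q: "real kk < q"
  shows "Phi0 q True = ennreal (1 / (q * (q - real kk)))"
proof -
  have inner: "(\<integral>\<^sup>+s. ennreal (psi0 q True \<tau> s) \<partial>lborel)
      = ennreal (1 / (q - real kk)) * (ennreal (\<tau> powr (q - 1)) * indicator {0..1} \<tau>)" for \<tau>
  proof (cases "0 \<le> \<tau> \<and> \<tau> \<le> 1")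
    case True
    have "(\<integral>\<^sup>+s. ennreal (psi0 q True \<tau> s) \<partial>lborel)
        = (\<integral>\<^sup>+s. ennreal (\<tau> powr (real kk - 1)) * (ennreal (s powr (q - real kk - 1)) * indicator {0..\<tau>} s) \<partial>lborel)"
      using True by (intro nn_integral_cong) (auto simp: psi0_def indicator_def ennreal_mult)
    also have "\<dots> = ennreal (\<tau> powr (real kk - 1)) * (\<integral>\<^sup>+s. ennreal (s powr (q - real kk - 1)) * indicator {0..\<tau>} s \<partial>lborel)"
      by (rule nn_integral_cmult) measurable
    also have "(\<integral>\<^sup>+s. ennreal (s powr (q - real kk - 1)) * indicator {0..\<tau>} s \<partial>lborel) = ennreal (\<tau> powr (q - real kk) / (q - real kk))"
      using q True by (subst powint) auto
    also have "ennreal (\<tau> powr (real kk - 1)) * ennreal (\<tau> powr (q - real kk) / (q - real kk))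
        = ennreal (1 / (q - real kk)) * ennreal (\<tau> powr (q - 1))"
    proof -
      have "\<tau> powr (real kk - 1) * \<tau> powr (q - real kk) = \<tau> powr (q - 1)"
      proof (cases "\<tau> = 0")
        case True then show ?thesis by simp
      next
        case False
        have "\<tau> powr (real kk - 1) * \<tau> powr (q - real kk) = \<tau> powr ((real kk - 1) + (q - real kk))"
          by (simp only: powr_add)
        then show ?thesis by simp
      qed
      then show ?thesis using q by (simp add: ennreal_mult[symmetric] mult.commute)
    qed
    finally show ?thesis using True by simp
  next
    case False
    then show ?thesis by (auto simp: psi0_def indicator_def)
  qed
  have "Phi0 q True = ennreal (1 / (q - real kk)) * (\<integral>\<^sup>+\<tau>. ennreal (\<tau> powr (q - 1)) * indicator {0..1} \<tau> \<partial>lborel)"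
    unfolding Phi0_def inner by (rule nn_integral_cmult) measurable
  also have "(\<integral>\<^sup>+\<tau>. ennreal (\<tau> powr (q - 1)) * indicator {0..1} \<tau> \<partial>lborel) = ennreal (1 / q)"
    using q kk_pos by (subst powint) auto
  also have "ennreal (1 / (q - real kk)) * ennreal (1 / q) = ennreal (1 / (q * (q - real kk)))"
    using q kk_pos by (simp add: ennreal_mult[symmetric] mult.commute)
  finally show ?thesis .
qed

lemma Phi0_True_inf:
  assumes q: "q \<le> real kk"
  shows "Phi0 q True = \<infinity>"
proof -
  have inner: "\<infinity> * indicator {1/2..1} \<tau> \<le> (\<integral>\<^sup>+s. ennreal (psi0 q True \<tau> s) \<partial>lborel)" for \<tau>
  proof (cases "1/2 \<le> \<tau> \<and> \<tau> \<le> 1")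
    case True
    have "(\<integral>\<^sup>+s. ennreal (psi0 q True \<tau> s) \<partial>lborel)
        = (\<integral>\<^sup>+s. ennreal (\<tau> powr (real kk - 1)) * (ennreal (s powr (q - real kk - 1)) * indicator {0..\<tau>} s) \<partial>lborel)"
      using True by (intro nn_integral_cong) (auto simp: psi0_def indicator_def ennreal_mult)
    also have "\<dots> = ennreal (\<tau> powr (real kk - 1)) * (\<integral>\<^sup>+s. ennreal (s powr (q - real kk - 1)) * indicator {0..\<tau>} s \<partial>lborel)"
      by (rule nn_integral_cmult) measurable
    also have "(\<integral>\<^sup>+s. ennreal (s powr (q - real kk - 1)) * indicator {0..\<tau>} s \<partial>lborel) = \<infinity>"
      using q True by (intro pow_int_inf) auto
    also have "ennreal (\<tau> powr (real kk - 1)) * \<infinity> = \<infinity>" using True by (simp add: ennreal_mult_top)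
    finally show ?thesis by simp
  next
    case False
    then have "indicator {1/2..1} \<tau> = (0::ennreal)" by (auto simp: indicator_def)
    then show ?thesis by simp
  qed
  have "(\<integral>\<^sup>+\<tau>. \<infinity> * indicator {1/2..1::real} \<tau> \<partial>lborel) \<le> Phi0 q True"
    unfolding Phi0_def by (intro nn_integral_mono inner)
  moreover have "(\<integral>\<^sup>+\<tau>. \<infinity> * indicator {1/2..1::real} \<tau> \<partial>lborel) = \<infinity>"
    by (subst nn_integral_cmult_indicator) (auto simp: ennreal_top_mult)
  ultimately show ?thesis by (simp add: top_unique)
qed

definition psiR :: "real \<Rightarrow> real \<Rightarrow> real \<Rightarrow> real \<Rightarrow> real" where
  "psiR q r \<tau> s = (if 0 \<le> \<tau> \<and> \<tau> \<le> 1 \<and> 0 \<le> s \<and> s \<le> 1 \<and> \<not> s \<le> \<tau>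
     then \<tau> powr (real kk - 1) * s powr (real mm - 1) * (r\<^sup>2 * \<tau>\<^sup>2 + s\<^sup>2) powr ((q - real DIM('a)) / 2) else 0)"

lemma psiR_borel[measurable]: "(\<lambda>(\<tau>, s). psiR q r \<tau> s) \<in> borel_measurable (borel \<Otimes>\<^sub>M borel)"
  unfolding psiR_def by measurable

definition PhiR :: "real \<Rightarrow> real \<Rightarrow> ennreal" where
  "PhiR q r = (\<integral>\<^sup>+\<tau>. (\<integral>\<^sup>+s. ennreal (psiR q r \<tau> s) \<partial>lborel) \<partial>lborel)"

lemma Phi_split: "Phi q False r = Phi q True r + PhiR q r"
proof -
  have pw: "ennreal (psi q False r \<tau> s) = ennreal (psi q True r \<tau> s) + ennreal (psiR q r \<tau> s)" for \<tau> s
    by (auto simp: psi_def psiR_def)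
  have "(\<integral>\<^sup>+s. ennreal (psi q False r \<tau> s) \<partial>lborel) = (\<integral>\<^sup>+s. ennreal (psi q True r \<tau> s) \<partial>lborel) + (\<integral>\<^sup>+s. ennreal (psiR q r \<tau> s) \<partial>lborel)" for \<tau>
    unfolding pw by (rule nn_integral_add) measurable
  then have "Phi q False r = (\<integral>\<^sup>+\<tau>. (\<integral>\<^sup>+s. ennreal (psi q True r \<tau> s) \<partial>lborel) + (\<integral>\<^sup>+s. ennreal (psiR q r \<tau> s) \<partial>lborel) \<partial>lborel)"
    unfolding Phi_def by simp
  also have "\<dots> = Phi q True r + PhiR q r"
    unfolding Phi_def PhiR_def
    by (rule nn_integral_add) (rule inner_meas, measurable)+
  finally show ?thesis .
qed

lemma psiR_bound:
  assumes q: "0 < q" "q \<le> real kk" "q < real DIM('a)" and r: "0 < r"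
  shows "ennreal (psiR q r \<tau> s) \<le> (ennreal (\<tau> powr (q/2 - 1)) * indicator {0..1} \<tau>) * (ennreal (s powr (q/2 - 1)) * indicator {0..1} s)"
proof (cases "0 < \<tau> \<and> \<tau> \<le> 1 \<and> 0 \<le> s \<and> s \<le> 1 \<and> \<not> s \<le> \<tau>")
  case True
  then have t: "0 < \<tau>" "\<tau> < s" "s \<le> 1" by auto
  then have s: "0 < s" by simp
  have "(r\<^sup>2 * \<tau>\<^sup>2 + s\<^sup>2) powr ((q - real DIM('a)) / 2) \<le> (s\<^sup>2) powr ((q - real DIM('a)) / 2)"
    using q s by (intro powr_mono2') auto
  also have "(s\<^sup>2) powr ((q - real DIM('a)) / 2) = s powr (q - real DIM('a))"
  proof -
    have "s\<^sup>2 = s powr 2" using s by (simp add: powr_numeral)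
    then have "(s\<^sup>2) powr ((q - real DIM('a)) / 2) = s powr (2 * ((q - real DIM('a)) / 2))"
      by (simp only: powr_powr)
    moreover have "2 * ((q - real DIM('a)) / 2) = q - real DIM('a)" by simp
    ultimately show ?thesis by (simp only:)
  qed
  finally have b1: "(r\<^sup>2 * \<tau>\<^sup>2 + s\<^sup>2) powr ((q - real DIM('a)) / 2) \<le> s powr (q - real DIM('a))" .
  have "psiR q r \<tau> s \<le> \<tau> powr (real kk - 1) * s powr (real mm - 1) * s powr (q - real DIM('a))"
    using True b1 by (auto simp: psiR_def intro!: mult_left_mono)
  also have "\<dots> = \<tau> powr (real kk - 1) * (s powr (q/2 - 1) * s powr (q/2 - real kk))"
  proof -
    have "s powr (real mm - 1) * s powr (q - real DIM('a)) = s powr ((real mm - 1) + (q - real DIM('a)))"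
      by (simp only: powr_add)
    also have "(real mm - 1) + (q - real DIM('a)) = (q/2 - 1) + (q/2 - real kk)" using n_eq by simp
    also have "s powr ((q/2 - 1) + (q/2 - real kk)) = s powr (q/2 - 1) * s powr (q/2 - real kk)"
      by (simp only: powr_add)
    finally show ?thesis by (simp add: mult.assoc)
  qed
  also have "\<dots> \<le> \<tau> powr (real kk - 1) * (s powr (q/2 - 1) * \<tau> powr (q/2 - real kk))"
    using t q by (intro mult_left_mono powr_mono2') auto
  also have "\<dots> = \<tau> powr (q/2 - 1) * s powr (q/2 - 1)"
  proof -
    have "\<tau> powr (real kk - 1) * \<tau> powr (q/2 - real kk) = \<tau> powr ((real kk - 1) + (q/2 - real kk))"
      by (simp only: powr_add)
    then show ?thesis by (simp add: algebra_simps)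
  qed
  finally have "psiR q r \<tau> s \<le> \<tau> powr (q/2 - 1) * s powr (q/2 - 1)" .
  then show ?thesis using True by (simp add: ennreal_mult[symmetric] ennreal_leI)
next
  case False
  then have "psiR q r \<tau> s = 0" by (auto simp: psiR_def)
  then show ?thesis by simp
qed

lemma PhiR_bound:
  assumes q: "0 < q" "q \<le> real kk" "q < real DIM('a)" and r: "0 < r"
  shows "PhiR q r \<le> ennreal ((2 / q) * (2 / q))"
proof -
  have "PhiR q r \<le> (\<integral>\<^sup>+\<tau>. (\<integral>\<^sup>+s. (ennreal (\<tau> powr (q/2 - 1)) * indicator {0..1} \<tau>) * (ennreal (s powr (q/2 - 1)) * indicator {0..1} s) \<partial>lborel) \<partial>lborel)"
    unfolding PhiR_def by (intro nn_integral_mono psiR_bound[OF q r])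
  also have "\<dots> = (\<integral>\<^sup>+\<tau>. (ennreal (\<tau> powr (q/2 - 1)) * indicator {0..1} \<tau>) * ennreal (2 / q) \<partial>lborel)"
  proof (rule nn_integral_cong)
    fix \<tau> :: real
    have "(\<integral>\<^sup>+s. (ennreal (\<tau> powr (q/2 - 1)) * indicator {0..1} \<tau>) * (ennreal (s powr (q/2 - 1)) * indicator {0..1} s) \<partial>lborel)
        = (ennreal (\<tau> powr (q/2 - 1)) * indicator {0..1} \<tau>) * (\<integral>\<^sup>+s. ennreal (s powr (q/2 - 1)) * indicator {0..1} s \<partial>lborel)"
      by (rule nn_integral_cmult) measurable
    also have "(\<integral>\<^sup>+s. ennreal (s powr (q/2 - 1)) * indicator {0..1} s \<partial>lborel) = ennreal (2 / q)"
      using q by (subst powint) auto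
    finally show "(\<integral>\<^sup>+s. (ennreal (\<tau> powr (q/2 - 1)) * indicator {0..1} \<tau>) * (ennreal (s powr (q/2 - 1)) * indicator {0..1} s) \<partial>lborel)
        = (ennreal (\<tau> powr (q/2 - 1)) * indicator {0..1} \<tau>) * ennreal (2 / q)" .
  qed
  also have "\<dots> = (\<integral>\<^sup>+\<tau>. ennreal (\<tau> powr (q/2 - 1)) * indicator {0..1} \<tau> \<partial>lborel) * ennreal (2 / q)"
    by (rule nn_integral_multc) measurable
  also have "(\<integral>\<^sup>+\<tau>. ennreal (\<tau> powr (q/2 - 1)) * indicator {0..1} \<tau> \<partial>lborel) = ennreal (2 / q)"
    using q by (subst powint) auto
  also have "ennreal (2 / q) * ennreal (2 / q) = ennreal ((2 / q) * (2 / q))"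
    using q by (simp add: ennreal_mult[symmetric])
  finally show ?thesis .
qed

end


context splitb
begin

lemma cnd_True: "{u \<in> sphere 0 1. cnd True r u} = {u \<in> sphere 0 1. r * norm (Qp u) \<le> norm (Pp u)}"
  by (simp add: cnd_def)

lemma cnd_False: "{u \<in> sphere 0 1. cnd False r u} = sphere 0 1"
  by (auto simp: cnd_def)

lemma eta_T: "0 < r \<Longrightarrow> r \<le> 1 \<Longrightarrow> rev_radial_gauss (Kc r) (sphere 0 1 \<inter> span B1) = {u \<in> sphere 0 1. cnd True r u}"
  using alpha_L cnd_True by simp

lemma eta_F: "0 < r \<Longrightarrow> r \<le> 1 \<Longrightarrow> rev_radial_gauss (Kc r) (sphere 0 1) = {u \<in> sphere 0 1. cnd False r u}"
  using alpha_S cnd_False by simp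

lemma Phi_fin:
  assumes r: "0 < r" "r \<le> 1" and q: "0 < q"
  shows "Phi q b r < \<infinity>"
proof -
  have "(\<integral>\<^sup>+x. fb q b r x \<partial>lborel) < \<infinity>"
  proof (cases b)
    case True
    then show ?thesis using dcm_Kc(2)[OF r q eta_T[OF r]] by simp
  next
    case False
    then show ?thesis using dcm_Kc(2)[OF r q eta_F[OF r]] by simp
  qed
  then have "ennreal (Cc * r powr real kk) * Phi q b r < \<infinity>" using fb_Phi[OF r] by simp
  moreover have "Cc * r powr real kk > 0" using Cc_pos r by simp
  ultimately show ?thesis by (auto simp: ennreal_mult_less_top)
qed

lemma dc_eq:
  assumes r: "0 < r" "r \<le> 1" and q: "0 < q"
    and eta: "rev_radial_gauss (Kc r) eta = {u \<in> sphere 0 1. cnd b r u}"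
  shows "dual_curv_measure q (Kc r) eta = (q / real DIM('a) * (Cc * r powr real kk)) * enn2real (Phi q b r)"
proof -
  have "dual_curv_measure q (Kc r) eta = q / real DIM('a) * enn2real (ennreal (Cc * r powr real kk) * Phi q b r)"
    using dcm_Kc(1)[OF r q eta] fb_Phi[OF r] by simp
  also have "\<dots> = q / real DIM('a) * ((Cc * r powr real kk) * enn2real (Phi q b r))"
    using Cc_pos r by (simp add: enn2real_mult)
  finally show ?thesis by simp
qed

lemma ratio_eq:
  assumes r: "0 < r" "r \<le> 1" and q: "0 < q"
  shows "dual_curv_measure q (Kc r) (sphere 0 1 \<inter> span B1) / dual_curv_measure q (Kc r) (sphere 0 1)
       = enn2real (Phi q True r) / enn2real (Phi q False r)"
proof -
  let ?c = "q / real DIM('a) * (Cc * r powr real kk)"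
  have c: "?c > 0" using q Cc_pos r by simp
  show ?thesis
    unfolding dc_eq[OF r q eta_T[OF r]] dc_eq[OF r q eta_F[OF r]]
    by (rule mult_divide_mult_cancel_left) (use q r Cc_pos in auto)
qed

lemma lim_case1:
  assumes q: "real kk < q" "q < real DIM('a)"
  shows "(\<lambda>l. enn2real (Phi q True (rr l)) / enn2real (Phi q False (rr l))) \<longlonglongrightarrow> real kk / q"
proof -
  have kq: "real kk > 0" "q > 0" using kk_pos q by auto
  have T: "(\<lambda>l. enn2real (Phi q True (rr l))) \<longlonglongrightarrow> 1 / (q * (q - real kk))"
    using Phi_lim[OF q(2), of True] Phi0_True[OF q(1)] q kq by (intro tendsto_enn2real) auto
  have F: "(\<lambda>l. enn2real (Phi q False (rr l))) \<longlonglongrightarrow> 1 / (real kk * (q - real kk))"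
    using Phi_lim[OF q(2), of False] Phi0_False[OF q(1)] q kq by (intro tendsto_enn2real) auto
  have "(\<lambda>l. enn2real (Phi q True (rr l)) / enn2real (Phi q False (rr l))) \<longlonglongrightarrow> (1 / (q * (q - real kk))) / (1 / (real kk * (q - real kk)))"
    using q kq by (intro tendsto_divide T F) auto
  also have "(1 / (q * (q - real kk))) / (1 / (real kk * (q - real kk))) = real kk / q"
    using q kq by (simp add: field_simps)
  finally show ?thesis .
qed

lemma lim_case2:
  assumes q: "0 < q" "q \<le> real kk" "q < real DIM('a)"
  shows "(\<lambda>l. enn2real (Phi q True (rr l)) / enn2real (Phi q False (rr l))) \<longlonglongrightarrow> 1"
proof -
  define T where "T l = enn2real (Phi q True (rr l))" for l
  define R where "R l = enn2real (PhiR q (rr l))" for l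
  define B where "B = (2 / q) * (2 / q)"
  have finT: "Phi q True (rr l) = ennreal (T l)" for l
    using Phi_fin[OF rr_pos rr_le1 q(1), of True l] by (simp add: T_def less_top[symmetric] ennreal_enn2real)
  have finR: "PhiR q (rr l) = ennreal (R l)" and R0: "0 \<le> R l" and RB: "R l \<le> B" for l
  proof -
    have "PhiR q (rr l) \<le> ennreal B" using PhiR_bound[OF q rr_pos] by (simp add: B_def)
    then have "PhiR q (rr l) < \<infinity>" by (simp add: le_less_trans)
    then show fr: "PhiR q (rr l) = ennreal (R l)" by (simp add: R_def less_top[symmetric] ennreal_enn2real)
    show "0 \<le> R l" by (simp add: R_def)
    show "R l \<le> B" using \<open>PhiR q (rr l) \<le> ennreal B\<close> fr by (simp add: B_def ennreal_le_iff)
  qed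
  have T0: "0 \<le> T l" for l by (simp add: T_def)
  have F: "enn2real (Phi q False (rr l)) = T l + R l" for l
    using Phi_split[of q "rr l"] finT finR R0 T0 by (simp add: ennreal_plus[symmetric] del: ennreal_plus)
  have Ttop: "filterlim T at_top sequentially"
  proof -
    have "(\<lambda>l. ennreal (T l)) \<longlonglongrightarrow> top"
      using Phi_lim[OF q(3), of True] Phi0_True_inf[OF q(2)] finT by simp
    then show ?thesis by (simp add: ennreal_tendsto_top_eq_at_top)
  qed
  have ev: "eventually (\<lambda>l. T l > 0) sequentially"
    using Ttop by (simp add: filterlim_at_top_dense)
  have lim0: "(\<lambda>l. B / T l) \<longlonglongrightarrow> 0"
    by (intro tendsto_divide_0[OF tendsto_const] filterlim_at_top_imp_at_infinity Ttop)
  have "(\<lambda>l. 1 - R l / (T l + R l)) \<longlonglongrightarrow> 1 - 0"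
  proof (intro tendsto_diff tendsto_const)
    show "(\<lambda>l. R l / (T l + R l)) \<longlonglongrightarrow> 0"
    proof (rule tendsto_sandwich[OF _ _ tendsto_const lim0])
      show "\<forall>\<^sub>F l in sequentially. 0 \<le> R l / (T l + R l)" using R0 T0 by auto
      show "\<forall>\<^sub>F l in sequentially. R l / (T l + R l) \<le> B / T l"
        using ev
      proof eventually_elim
        case (elim l)
        have "R l / (T l + R l) \<le> R l / T l"
          using elim R0[of l] by (intro divide_left_mono) (auto intro!: mult_pos_pos add_pos_nonneg)
        also have "\<dots> \<le> B / T l" using RB elim by (intro divide_right_mono) auto
        finally show ?case .
      qed
    qed
  qed
  moreover have eqn: "1 - R l / (T l + R l) = enn2real (Phi q True (rr l)) / enn2real (Phi q False (rr l))"
    if "T l > 0" for l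
  proof -
    have p: "T l + R l > 0" using that R0[of l] by simp
    have "1 - R l / (T l + R l) = T l / (T l + R l)" using p by (simp add: field_simps)
    then show ?thesis by (simp only: F T_def)
  qed
  ultimately have L: "(\<lambda>l. 1 - R l / (T l + R l)) \<longlonglongrightarrow> 1" by simp
  have E: "eventually (\<lambda>l. 1 - R l / (T l + R l) = enn2real (Phi q True (rr l)) / enn2real (Phi q False (rr l))) sequentially"
    using ev by (rule eventually_mono) (rule eqn)
  show ?thesis using L tendsto_cong[OF E] by simp
qed

end

theorem mainTheorem2:
  fixes q :: real and k :: nat
  assumes "DIM('a::euclidean_space) \<ge> 2"
    and "0 < q" and "q < real DIM('a)"
    and "1 \<le> k" and "k \<le> DIM('a) - 1"
  shows "\<exists>(K :: nat \<Rightarrow> 'a set) (L :: 'a set).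
           (\<forall>l. convex_body (K l) \<and> origin_symmetric (K l)) \<and>
           subspace L \<and> dim L = k \<and>
           ((\<lambda>l. dual_curv_measure q (K l) (sphere 0 1 \<inter> L) / dual_curv_measure q (K l) (sphere 0 1))
              \<longlonglongrightarrow> (if real k \<le> q then real k / q else 1))"
proof -
  have "k \<le> card (Basis :: 'a set)" using assms by simp
  then obtain B1 :: "'a set" where B1: "B1 \<subseteq> Basis" "card B1 = k" "finite B1"
    by (rule obtain_subset_with_card_n)
  have ne: "B1 \<noteq> {}" using B1 assms by auto
  have nf: "B1 \<noteq> Basis" using B1 assms by auto
  interpret splitb B1 using B1 ne nf by unfold_locales auto
  have kk: "kk = k" using B1 by (simp add: kk_def)
  define K where "K l = Kc (rr l)" for l
  have conv: "\<forall>l. convex_body (K l) \<and> origin_symmetric (K l)"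
    using Kc_convex_body[OF rr_pos rr_le1] Kc_symm by (simp add: K_def)
  have sub: "subspace (span B1)" by (rule subspace_span)
  have dim: "dim (span B1) = k"
    using dim_span_eq_card_independent[OF independent_mono[OF independent_Basis B1(1)]] B1 by simp
  have eq: "(\<lambda>l. dual_curv_measure q (K l) (sphere 0 1 \<inter> span B1) / dual_curv_measure q (K l) (sphere 0 1))
      = (\<lambda>l. enn2real (Phi q True (rr l)) / enn2real (Phi q False (rr l)))"
    using ratio_eq[OF rr_pos rr_le1 assms(2)] by (simp add: K_def)
  have lim: "(\<lambda>l. enn2real (Phi q True (rr l)) / enn2real (Phi q False (rr l))) \<longlonglongrightarrow> (if real k \<le> q then real k / q else 1)"
  proof (cases "real k < q")
    case True
    then show ?thesis using lim_case1[of q] assms kk by simp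
  next
    case False
    then have "q \<le> real kk" using kk by simp
    then have "(\<lambda>l. enn2real (Phi q True (rr l)) / enn2real (Phi q False (rr l))) \<longlonglongrightarrow> 1"
      using lim_case2[of q] assms by simp
    moreover have "(if real k \<le> q then real k / q else 1) = 1" using False assms by auto
    ultimately show ?thesis by simp
  qed
  show ?thesis
    by (rule exI[of _ K], rule exI[of _ "span B1"]) (use conv sub dim eq lim in simp)
qed


end
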